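(* Let $1<p<\infty$, $p'=p/(p-1)$, $m\ge1$, $d=1+m$, $0\le\alpha<2$, $\beta_1,\dots,\beta_m\ge0$, $\mathbf{A}=\mathrm{diag}(|x_1|^\alpha,|x_1|^{\beta_1},\dots,|x_1|^{\beta_m})$, and $\Omega\subseteq\mathbb{R}^d$ open with $\Omega\cap\{x_1=0\}\neq\emptyset$. If $\frac{2}{p'}\le\alpha<2$, then for every $f\in L^1_{loc}(\Omega)$ with $|\nabla_{\mathbf{A}}f|_{\mathbf{A}}\in L^p(\Omega)$ one has $\nabla_{\mathbf{A}}(f\mathbf{1}_{\Omega^\pm})=(\nabla_{\mathbf{A}}f)\mathbf{1}_{\Omega^\pm}$ with $|\nabla_{\mathbf{A}}(f\mathbf{1}_{\Omega^\pm})|_{\mathbf{A}}\in L^p(\Omega^\pm)$, and $$\mathcal{E}(f)=\mathcal{E}(f\mathbf{1}_{\Omega^+})+\mathcal{E}(f\mathbf{1}_{\Omega^-}).$$ Moreover, $\langle\mathcal{E}'(f),g\rangle=\langle\mathcal{E}'(f\mathbf{1}_{\Omega^+}),g\rangle+\langle\mathcal{E}'(f\mathbf{1}_{\Omega^-}),g\rangle$ for all $f,g\in L^1_{loc}(\Omega)$ with $|\nabla_{\mathbf{A}}f|_{\mathbf{A}},|\nabla_{\mathbf{A}}g|_{\mathbf{A}}\in L^p(\Omega)$.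
   Context: Points of $\mathbb{R}^{1+m}$ are $(x_1,y_1,\dots,y_m)$; $\Omega^+=\Omega\cap\{x_1>0\}$, $\Omega^-=\Omega\cap\{x_1<0\}$; $\mathbf{1}_S$ is the indicator of $S$. $\nabla_{\mathbf{A}}f=\mathbf{A}\nabla f$, $|\nabla_{\mathbf{A}}f|_{\mathbf{A}}^2=|x_1|^\alpha|\partial_{x_1}f|^2+\sum_j|x_1|^{\beta_j}|\partial_{y_j}f|^2$. $\mathcal{E}(f)=\frac1p\int_\Omega\big[|x_1|^\alpha|\partial_{x_1}f|^2+\sum_{j=1}^m|x_1|^{\beta_j}|\partial_{y_j}f|^2\big]^{p/2}dx$ for $f\in L^1_{loc}(\Omega)$ with $|\nabla_{\mathbf{A}}f|_{\mathbf{A}}\in L^p(\Omega)$, and $\langle\mathcal{E}'(f),g\rangle=\int_\Omega|\nabla_{\mathbf{A}}f|_{\mathbf{A}}^{p-2}\langle\nabla_{\mathbf{A}}f,\nabla g\rangle\,dx$ its directional (Gâteaux) derivative. *)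

theory Defs
  imports "HOL-Analysis.Analysis"
begin

type_synonym 'm pt = "real \<times> (real^'m)"

fun dirderiv :: "('a::real_normed_vector \<Rightarrow> real) \<Rightarrow> 'a list \<Rightarrow> 'a \<Rightarrow> real" where
  "dirderiv \<psi> [] = \<psi>"
| "dirderiv \<psi> (v # vs) = (\<lambda>x. frechet_derivative (dirderiv \<psi> vs) (at x) v)"

definition smooth_fun :: "('a::real_normed_vector \<Rightarrow> real) \<Rightarrow> bool" where
  "smooth_fun \<psi> \<longleftrightarrow> (\<forall>vs. (\<forall>x. dirderiv \<psi> vs differentiable (at x))
                            \<and> continuous_on UNIV (dirderiv \<psi> vs))"

definition test_fun :: "'a::real_normed_vector set \<Rightarrow> ('a \<Rightarrow> real) \<Rightarrow> bool" where
  "test_fun \<Omega> \<psi> \<longleftrightarrow> smooth_fun \<psi> \<and> compact (closure {x. \<psi> x \<noteq> 0})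
                     \<and> closure {x. \<psi> x \<noteq> 0} \<subseteq> \<Omega>"

definition dx1 :: "('m::finite pt \<Rightarrow> real) \<Rightarrow> 'm pt \<Rightarrow> real" where
  "dx1 \<psi> x = frechet_derivative \<psi> (at x) (1, 0)"

definition dy :: "'m::finite \<Rightarrow> ('m pt \<Rightarrow> real) \<Rightarrow> 'm pt \<Rightarrow> real" where
  "dy j \<psi> x = frechet_derivative \<psi> (at x) (0, axis j 1)"

definition loc_integrable :: "'m::finite pt set \<Rightarrow> ('m pt \<Rightarrow> real) \<Rightarrow> bool" where
  "loc_integrable \<Omega> f \<longleftrightarrow>
     (\<forall>K. compact K \<and> K \<subseteq> \<Omega> \<longrightarrow> set_integrable lebesgue K f)"

definition ind :: "'a set \<Rightarrow> 'a \<Rightarrow> real" where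
  "ind S x = (if x \<in> S then 1 else 0)"

definition Omega_plus :: "'m::finite pt set \<Rightarrow> 'm pt set" where
  "Omega_plus \<Omega> = \<Omega> \<inter> {x. fst x > 0}"

definition Omega_minus :: "'m::finite pt set \<Rightarrow> 'm pt set" where
  "Omega_minus \<Omega> = \<Omega> \<inter> {x. fst x < 0}"

text \<open>A pair D = (D1, Dy) plays the role of the gradient of f,
  so that nabla_A f = A D = (|x1|^alpha D1, (|x1|^beta_j Dy_j)_j).
  The defining identity is the weak (divergence-form) one:
  for every test function psi in C_c^infinity(Omega),
    int f d/dx1(|x1|^alpha psi) = - int |x1|^alpha D1 psi,
    int f |x1|^beta_j d/dy_j psi  = - int |x1|^beta_j Dy_j psi,
  i.e. < nabla_A f, Phi > = - int f div(A Phi) for all test vector fields Phi.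
  Here d/dx1(|x1|^alpha psi) is written out (its value on the null set x1 = 0
  is irrelevant).\<close>
definition dx1_weighted :: "real \<Rightarrow> ('m::finite pt \<Rightarrow> real) \<Rightarrow> 'm pt \<Rightarrow> real" where
  "dx1_weighted \<alpha> \<psi> x =
     \<alpha> * sgn (fst x) * \<bar>fst x\<bar> powr (\<alpha> - 1) * \<psi> x + \<bar>fst x\<bar> powr \<alpha> * dx1 \<psi> x"

definition weak_A_grad ::
  "real \<Rightarrow> ('m::finite \<Rightarrow> real) \<Rightarrow> 'm pt set \<Rightarrow> ('m pt \<Rightarrow> real)
     \<Rightarrow> ('m pt \<Rightarrow> real) \<Rightarrow> ('m pt \<Rightarrow> real^'m) \<Rightarrow> bool" where
  "weak_A_grad \<alpha> \<beta> \<Omega> f D1 Dy \<longleftrightarrow>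
     set_borel_measurable lebesgue \<Omega> D1 \<and> set_borel_measurable lebesgue \<Omega> Dy \<and>
     (\<forall>\<psi>. test_fun \<Omega> \<psi> \<longrightarrow>
        set_integrable lebesgue \<Omega> (\<lambda>x. f x * dx1_weighted \<alpha> \<psi> x) \<and>
        set_integrable lebesgue \<Omega> (\<lambda>x. \<bar>fst x\<bar> powr \<alpha> * D1 x * \<psi> x) \<and>
        (LINT x:\<Omega>|lebesgue. f x * dx1_weighted \<alpha> \<psi> x)
          = - (LINT x:\<Omega>|lebesgue. \<bar>fst x\<bar> powr \<alpha> * D1 x * \<psi> x) \<and>
        (\<forall>j. set_integrable lebesgue \<Omega> (\<lambda>x. f x * \<bar>fst x\<bar> powr \<beta> j * dy j \<psi> x) \<and>
             set_integrable lebesgue \<Omega> (\<lambda>x. \<bar>fst x\<bar> powr \<beta> j * Dy x $ j * \<psi> x) \<and>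
             (LINT x:\<Omega>|lebesgue. f x * \<bar>fst x\<bar> powr \<beta> j * dy j \<psi> x)
               = - (LINT x:\<Omega>|lebesgue. \<bar>fst x\<bar> powr \<beta> j * Dy x $ j * \<psi> x)))"

definition A_norm ::
  "real \<Rightarrow> ('m::finite \<Rightarrow> real) \<Rightarrow> ('m pt \<Rightarrow> real) \<Rightarrow> ('m pt \<Rightarrow> real^'m) \<Rightarrow> 'm pt \<Rightarrow> real" where
  "A_norm \<alpha> \<beta> D1 Dy x =
     sqrt (\<bar>fst x\<bar> powr \<alpha> * (D1 x)\<^sup>2 + (\<Sum>j\<in>UNIV. \<bar>fst x\<bar> powr \<beta> j * (Dy x $ j)\<^sup>2))"

definition A_norm_Lp ::
  "real \<Rightarrow> real \<Rightarrow> ('m::finite \<Rightarrow> real) \<Rightarrow> 'm pt set \<Rightarrow> ('m pt \<Rightarrow> real) \<Rightarrow> ('m pt \<Rightarrow> real^'m) \<Rightarrow> bool" where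
  "A_norm_Lp p \<alpha> \<beta> S D1 Dy \<longleftrightarrow>
     set_borel_measurable lebesgue S (A_norm \<alpha> \<beta> D1 Dy) \<and>
     set_integrable lebesgue S (\<lambda>x. A_norm \<alpha> \<beta> D1 Dy x powr p)"

definition energy ::
  "real \<Rightarrow> real \<Rightarrow> ('m::finite \<Rightarrow> real) \<Rightarrow> 'm pt set \<Rightarrow> ('m pt \<Rightarrow> real) \<Rightarrow> ('m pt \<Rightarrow> real^'m) \<Rightarrow> real" where
  "energy p \<alpha> \<beta> \<Omega> D1 Dy = (1 / p) * (LINT x:\<Omega>|lebesgue. A_norm \<alpha> \<beta> D1 Dy x powr p)"

text \<open><E'(f), g> = int_Omega |nabla_A f|_A^(p-2) <nabla_A f, nabla g>, where
  <A Df, Dg> = |x1|^alpha Df1 Dg1 + sum_j |x1|^beta_j Dfy_j Dgy_j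
  (with the usual convention that the integrand is 0 where nabla_A f = 0).\<close>
definition energy_deriv ::
  "real \<Rightarrow> real \<Rightarrow> ('m::finite \<Rightarrow> real) \<Rightarrow> 'm pt set \<Rightarrow> ('m pt \<Rightarrow> real) \<Rightarrow> ('m pt \<Rightarrow> real^'m)
     \<Rightarrow> ('m pt \<Rightarrow> real) \<Rightarrow> ('m pt \<Rightarrow> real^'m) \<Rightarrow> real" where
  "energy_deriv p \<alpha> \<beta> \<Omega> Df1 Dfy Dg1 Dgy =
     (LINT x:\<Omega>|lebesgue. A_norm \<alpha> \<beta> Df1 Dfy x powr (p - 2) *
        (\<bar>fst x\<bar> powr \<alpha> * Df1 x * Dg1 x + (\<Sum>j\<in>UNIV. \<bar>fst x\<bar> powr \<beta> j * Dfy x $ j * Dgy x $ j)))"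

end

theory Submission
  imports Defs "HOL-Real_Asymp.Real_Asymp"
begin
lemma smooth_by_class:
  fixes P :: "('a::real_normed_vector \<Rightarrow> real) \<Rightarrow> bool"
  assumes "P f"
    and "\<And>g. P g \<Longrightarrow> (\<forall>x. g differentiable (at x)) \<and> (\<forall>v. P (\<lambda>x. frechet_derivative g (at x) v))"
  shows "smooth_fun f"
proof -
  have "P (dirderiv f vs)" for vs
    by (induction vs) (use assms in auto)
  then show ?thesis unfolding smooth_fun_def
    using assms(2) by (meson differentiable_imp_continuous_on differentiable_on_def differentiable_at_withinI)
qed

lemma dirderiv_append: "dirderiv \<psi> (vs @ [v]) = dirderiv (dirderiv \<psi> [v]) vs"
  by (induction vs) auto

lemma smooth_diff_at: "smooth_fun f \<Longrightarrow> f differentiable (at x)"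
  unfolding smooth_fun_def by (metis dirderiv.simps(1))

lemma smooth_cont: "smooth_fun f \<Longrightarrow> continuous_on UNIV f"
  unfolding smooth_fun_def by (metis dirderiv.simps(1))

lemma smooth_deriv: "smooth_fun f \<Longrightarrow> smooth_fun (\<lambda>x. frechet_derivative f (at x) v)"
  unfolding smooth_fun_def
proof (intro allI)
  fix vs assume "\<forall>vs. (\<forall>x. dirderiv f vs differentiable at x) \<and> continuous_on UNIV (dirderiv f vs)"
  then have "(\<forall>x. dirderiv f (vs@[v]) differentiable at x) \<and> continuous_on UNIV (dirderiv f (vs@[v]))" by blast
  then show "(\<forall>x. dirderiv (\<lambda>x. frechet_derivative f (at x) v) vs differentiable at x) \<and>
          continuous_on UNIV (dirderiv (\<lambda>x. frechet_derivative f (at x) v) vs)"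
    by (simp add: dirderiv_append)
qed

lemma smooth_has_derivative: "smooth_fun f \<Longrightarrow> (f has_derivative frechet_derivative f (at x)) (at x)"
  using smooth_diff_at frechet_derivative_works by blast

lemma smooth_const: "smooth_fun (\<lambda>x::'a::real_normed_vector. c)"
proof (rule smooth_by_class[where P="\<lambda>g. \<exists>c. g = (\<lambda>x. c)"])
  fix g :: "'a \<Rightarrow> real" assume "\<exists>c. g = (\<lambda>x. c)"
  then obtain c where g: "g = (\<lambda>x. c)" by blast
  have fd: "frechet_derivative g (at x) = (\<lambda>v. 0)" for x
    using frechet_derivative_at[OF has_derivative_const[of c "at x"]] g by simp
  show "(\<forall>x. g differentiable at x) \<and> (\<forall>v. \<exists>c. (\<lambda>x. frechet_derivative g (at x) v) = (\<lambda>x. c))"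
    using fd g by auto
qed auto

fun psum :: "(('a \<Rightarrow> real) \<times> ('a \<Rightarrow> real)) list \<Rightarrow> 'a \<Rightarrow> real" where
  "psum [] x = 0"
| "psum ((a,b)#L) x = a x * b x + psum L x"

fun dlist :: "'a::real_normed_vector \<Rightarrow> (('a \<Rightarrow> real) \<times> ('a \<Rightarrow> real)) list \<Rightarrow> (('a \<Rightarrow> real) \<times> ('a \<Rightarrow> real)) list" where
  "dlist v [] = []"
| "dlist v ((a,b)#L) = (a, \<lambda>x. frechet_derivative b (at x) v) # (\<lambda>x. frechet_derivative a (at x) v, b) # dlist v L"

lemma psum_deriv:
  assumes "\<forall>(a,b)\<in>set L. smooth_fun a \<and> smooth_fun b"
  shows "(psum L has_derivative (\<lambda>v. psum (dlist v L) x)) (at x)"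
  using assms
proof (induction L)
  case Nil then show ?case by (simp add: has_derivative_const)
next
  case (Cons p L)
  obtain a b where p: "p = (a,b)" by force
  have sa: "smooth_fun a" and sb: "smooth_fun b" using Cons.prems p by auto
  have h: "((\<lambda>x. a x * b x) has_derivative (\<lambda>v. a x * frechet_derivative b (at x) v + frechet_derivative a (at x) v * b x)) (at x)"
    using has_derivative_mult[OF smooth_has_derivative[OF sa] smooth_has_derivative[OF sb]] by simp
  have "((\<lambda>x. a x * b x + psum L x) has_derivative (\<lambda>v. (a x * frechet_derivative b (at x) v + frechet_derivative a (at x) v * b x) + psum (dlist v L) x)) (at x)"
    using has_derivative_add[OF h Cons.IH] Cons.prems by auto
  then show ?case using p by (simp add: add.assoc)
qed

lemma dlist_smooth: "\<forall>(a,b)\<in>set L. smooth_fun a \<and> smooth_fun b \<Longrightarrow> \<forall>(a,b)\<in>set (dlist v L). smooth_fun a \<and> smooth_fun b"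
  by (induction v L rule: dlist.induct) (auto simp: smooth_deriv)

lemma smooth_mult:
  assumes "smooth_fun a" "smooth_fun b"
  shows "smooth_fun (\<lambda>x. a x * b x)"
proof (rule smooth_by_class[where P="\<lambda>g. \<exists>L. (\<forall>(a,b)\<in>set L. smooth_fun a \<and> smooth_fun b) \<and> g = psum L"])
  show "\<exists>L. (\<forall>(a, b)\<in>set L. smooth_fun a \<and> smooth_fun b) \<and> (\<lambda>x. a x * b x) = psum L"
    by (rule exI[of _ "[(a,b)]"]) (use assms in auto)
next
  fix g :: "'a \<Rightarrow> real" assume "\<exists>L. (\<forall>(a, b)\<in>set L. smooth_fun a \<and> smooth_fun b) \<and> g = psum L"
  then obtain L where L: "\<forall>(a, b)\<in>set L. smooth_fun a \<and> smooth_fun b" and g: "g = psum L" by blast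
  have fd: "frechet_derivative g (at x) = (\<lambda>v. psum (dlist v L) x)" for x
    using frechet_derivative_at[OF psum_deriv[OF L]] g by simp
  have dl: "\<forall>(a, b)\<in>set (dlist v L). smooth_fun a \<and> smooth_fun b" for v
    using L by (rule dlist_smooth)
  show "(\<forall>x. g differentiable at x) \<and> (\<forall>v. \<exists>L. (\<forall>(a, b)\<in>set L. smooth_fun a \<and> smooth_fun b) \<and> (\<lambda>x. frechet_derivative g (at x) v) = psum L)"
  proof (intro conjI allI)
    show "g differentiable at x" for x using psum_deriv[OF L] g unfolding differentiable_def by blast
    show "\<exists>L. (\<forall>(a, b)\<in>set L. smooth_fun a \<and> smooth_fun b) \<and> (\<lambda>x. frechet_derivative g (at x) v) = psum L" for v
      by (rule exI[of _ "dlist v L"]) (use fd dl in auto)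
  qed
qed

lemma smooth_cong: "smooth_fun a \<Longrightarrow> (\<And>x. a x = b x) \<Longrightarrow> smooth_fun b"
  by (metis ext)

lemma smooth_add:
  assumes "smooth_fun a" "smooth_fun b"
  shows "smooth_fun (\<lambda>x. a x + b x)"
proof -
  have "smooth_fun (psum [(a, \<lambda>x. 1), (b, \<lambda>x. 1)])"
  proof (rule smooth_by_class[where P="\<lambda>g. \<exists>L. (\<forall>(a,b)\<in>set L. smooth_fun a \<and> smooth_fun b) \<and> g = psum L"])
    fix g :: "'a \<Rightarrow> real" assume "\<exists>L. (\<forall>(a, b)\<in>set L. smooth_fun a \<and> smooth_fun b) \<and> g = psum L"
    then obtain L where L: "\<forall>(a, b)\<in>set L. smooth_fun a \<and> smooth_fun b" and g: "g = psum L" by blast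
    have fd: "frechet_derivative g (at x) = (\<lambda>v. psum (dlist v L) x)" for x
      using frechet_derivative_at[OF psum_deriv[OF L]] g by simp
    have dl: "\<forall>(a, b)\<in>set (dlist v L). smooth_fun a \<and> smooth_fun b" for v
      using L by (rule dlist_smooth)
    show "(\<forall>x. g differentiable at x) \<and> (\<forall>v. \<exists>L. (\<forall>(a, b)\<in>set L. smooth_fun a \<and> smooth_fun b) \<and> (\<lambda>x. frechet_derivative g (at x) v) = psum L)"
  proof (intro conjI allI)
    show "g differentiable at x" for x using psum_deriv[OF L] g unfolding differentiable_def by blast
    show "\<exists>L. (\<forall>(a, b)\<in>set L. smooth_fun a \<and> smooth_fun b) \<and> (\<lambda>x. frechet_derivative g (at x) v) = psum L" for v
      by (rule exI[of _ "dlist v L"]) (use fd dl in auto)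
  qed
  qed (rule exI[of _ "[(a, \<lambda>x. 1), (b, \<lambda>x. 1)]"], use assms smooth_const in auto)
  then show ?thesis by (rule smooth_cong) simp
qed

lemma smooth_cmult: "smooth_fun a \<Longrightarrow> smooth_fun (\<lambda>x. c * a x)"
  using smooth_mult[OF smooth_const] by blast

lemma smooth_comp_linear:
  fixes \<theta> :: "'b::real_normed_vector \<Rightarrow> real" and L :: "'a::real_normed_vector \<Rightarrow> 'b"
  assumes "smooth_fun \<theta>" "bounded_linear L"
  shows "smooth_fun (\<lambda>x. \<theta> (L x + c))"
proof (rule smooth_by_class[where P="\<lambda>g. \<exists>\<theta>. smooth_fun \<theta> \<and> g = (\<lambda>x. \<theta> (L x + c))"])
  fix g assume "\<exists>\<theta>. smooth_fun \<theta> \<and> g = (\<lambda>x. \<theta> (L x + c))"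
  then obtain \<theta> where s: "smooth_fun \<theta>" and g: "g = (\<lambda>x. \<theta> (L x + c))" by blast
  have inner: "((\<lambda>x. L x + c) has_derivative L) (at x)" for x
    using has_derivative_add_const[OF bounded_linear_imp_has_derivative[OF assms(2)]] by simp
  have d: "(g has_derivative (\<lambda>v. frechet_derivative \<theta> (at (L x + c)) (L v))) (at x)" for x
    unfolding g using has_derivative_compose[OF inner smooth_has_derivative[OF s]] by (simp add: o_def)
  have fd: "(\<lambda>x. frechet_derivative g (at x) v) = (\<lambda>x. (\<lambda>y. frechet_derivative \<theta> (at y) (L v)) (L x + c))" for v
    using frechet_derivative_at[OF d] by (auto simp: fun_eq_iff)
  show "(\<forall>x. g differentiable at x) \<and> (\<forall>v. \<exists>\<theta>. smooth_fun \<theta> \<and> (\<lambda>x. frechet_derivative g (at x) v) = (\<lambda>x. \<theta> (L x + c)))"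
  proof (intro conjI allI)
    show "g differentiable at x" for x using d unfolding differentiable_def by blast
    show "\<exists>\<theta>. smooth_fun \<theta> \<and> (\<lambda>x. frechet_derivative g (at x) v) = (\<lambda>x. \<theta> (L x + c))" for v
      using fd smooth_deriv[OF s] by blast
  qed
qed (rule exI[of _ \<theta>], use assms(1) in simp)

lemma fd_real:
  fixes f :: "real \<Rightarrow> real"
  assumes "f differentiable (at x)"
  shows "frechet_derivative f (at x) = (\<lambda>v. deriv f x * v)"
proof -
  have "(f has_real_derivative deriv f x) (at x)" using assms DERIV_deriv_iff_real_differentiable by blast
  then have "(f has_derivative (\<lambda>v. deriv f x * v)) (at x)" by (simp add: has_field_derivative_def)
  then show ?thesis by (rule frechet_derivative_at[symmetric])
qed

lemma fd_real_D:
  fixes f :: "real \<Rightarrow> real"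
  assumes "(f has_real_derivative D) (at x)"
  shows "frechet_derivative f (at x) = (\<lambda>v. D * v)"
proof -
  have "(f has_derivative (\<lambda>v. D * v)) (at x)" using assms by (simp add: has_field_derivative_def)
  then show ?thesis by (rule frechet_derivative_at[symmetric])
qed

lemma smooth_deriv_real: "smooth_fun (f::real\<Rightarrow>real) \<Longrightarrow> smooth_fun (deriv f)"
proof -
  assume s: "smooth_fun f"
  have eq: "deriv f = (\<lambda>x. frechet_derivative f (at x) 1)"
    by (rule ext) (simp add: fd_real[OF smooth_diff_at[OF s]])
  show ?thesis unfolding eq by (rule smooth_deriv[OF s])
qed

lemma smooth_DERIV: "smooth_fun (f::real\<Rightarrow>real) \<Longrightarrow> (f has_real_derivative deriv f x) (at x)"
  using smooth_diff_at DERIV_deriv_iff_real_differentiable by blast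

lemma DERIV_differentiable: "(f has_real_derivative D) (at x) \<Longrightarrow> f differentiable (at x)"
  by (auto simp: has_field_derivative_def differentiable_def)

lemma smooth_antideriv:
  fixes H h :: "real \<Rightarrow> real"
  assumes "smooth_fun h" "\<And>x. (H has_real_derivative h x) (at x)"
  shows "smooth_fun H"
proof (rule smooth_by_class[where P="\<lambda>g. g = H \<or> smooth_fun g"])
  fix g assume "g = H \<or> smooth_fun g"
  then show "(\<forall>x. g differentiable at x) \<and> (\<forall>v. (\<lambda>x. frechet_derivative g (at x) v) = H \<or> smooth_fun (\<lambda>x. frechet_derivative g (at x) v))"
  proof
    assume g: "g = H"
    have fd: "frechet_derivative g (at x) = (\<lambda>v. h x * v)" for x
      using fd_real_D[OF assms(2)] g by simp
    have "smooth_fun (\<lambda>x. h x * v)" for v by (rule smooth_mult[OF assms(1) smooth_const])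
    have "(\<lambda>x. frechet_derivative g (at x) v) = (\<lambda>x. h x * v)" for v using fd by (simp add: mult.commute)
    moreover have "g differentiable at x" for x using g assms(2) DERIV_differentiable by blast
    ultimately show ?thesis using \<open>\<And>v. smooth_fun (\<lambda>x. h x * v)\<close> by auto
  next
    assume "smooth_fun g" then show ?thesis using smooth_diff_at smooth_deriv by blast
  qed
qed simp

definition Ef :: "real \<Rightarrow> real \<Rightarrow> real \<Rightarrow> real" where
  "Ef c g x = (if x > 0 then c * x powr g * exp (-1/x) else 0)"

lemma Ef_deriv: "(Ef c g has_real_derivative (Ef (c*g) (g-1) x + Ef c (g-2) x)) (at x)"
proof (cases "x > 0")
  case True
  have p: "((\<lambda>x. x powr g) has_real_derivative g * x powr (g-1)) (at x)"
    by (rule has_real_derivative_powr) (use True in simp)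
  have q0: "((\<lambda>x. -1 / x) has_real_derivative ((0 * x - (-1) * 1) / (x * x))) (at x)"
    by (rule DERIV_divide[OF DERIV_const DERIV_ident]) (use True in simp)
  have q: "((\<lambda>x. exp (-1/x)) has_real_derivative exp (-1/x) * (1 / x^2)) (at x)"
  proof -
    have "((\<lambda>x. -1 / x) has_real_derivative 1 / x^2) (at x)"
      using q0 by (simp add: power2_eq_square)
    from DERIV_fun_exp[OF this] show ?thesis by simp
  qed
  have d: "((\<lambda>x. c * x powr g * exp (-1/x)) has_real_derivative
      c * (g * x powr (g-1)) * exp (-1/x) + c * x powr g * (exp (-1/x) * (1 / x^2))) (at x)"
  proof -
    have "((\<lambda>x. c * x powr g * exp (-1/x)) has_real_derivative
      c * (g * x powr (g-1)) * exp (-1/x) + exp (-1/x) * (1 / x^2) * (c * x powr g)) (at x)"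
      using DERIV_mult[OF DERIV_cmult[OF p, of c] q] by simp
    then show ?thesis by (simp add: algebra_simps)
  qed
  have e: "c * (g * x powr (g-1)) * exp (-1/x) + c * x powr g * (exp (-1/x) * (1 / x^2))
        = Ef (c*g) (g-1) x + Ef c (g-2) x"
  proof -
    have eq: "x powr (g-2) = x powr g * (1/x^2)"
      using True by (simp add: powr_diff powr_numeral)
    show ?thesis using True unfolding Ef_def eq by (simp add: algebra_simps)
  qed
  have d': "((\<lambda>x. c * x powr g * exp (-1/x)) has_real_derivative (Ef (c*g) (g-1) x + Ef c (g-2) x)) (at x)"
    using d e by simp
  show ?thesis
    apply (rule has_field_derivative_transform_within_open[where S="{0<..}", OF d'])
    using True by (auto simp: Ef_def)
next
  case False
  show ?thesis
  proof (cases "x < 0")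
    case True
    show ?thesis
      apply (rule has_field_derivative_transform_within_open[where S="{..<0}" and f="\<lambda>x. 0"])
      using True by (auto simp: Ef_def)
  next
    case False
    with \<open>\<not> x > 0\<close> have x0: "x = 0" by simp
    have lim: "((\<lambda>h. (Ef c g h - Ef c g 0) / h) \<longlongrightarrow> 0) (at 0)"
    proof -
      have r: "((\<lambda>h. c * (h powr (g - 1) * exp (-1/h))) \<longlongrightarrow> c * 0) (at_right 0)"
        by (intro tendsto_mult tendsto_const) real_asymp
      have ev: "\<forall>\<^sub>F h in at_right 0. c * (h powr (g - 1) * exp (-1/h)) = (Ef c g h - Ef c g 0) / h"
      proof (rule eventually_mono[OF eventually_at_right_less])
        fix h :: real assume h: "0 < h"
        have "h powr (g - 1) = h powr g / h" using h by (simp add: powr_diff)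
        then show "c * (h powr (g - 1) * exp (-1/h)) = (Ef c g h - Ef c g 0) / h"
          using h by (simp add: Ef_def)
      qed
      have r': "((\<lambda>h. (Ef c g h - Ef c g 0) / h) \<longlongrightarrow> 0) (at_right 0)"
        using Lim_transform_eventually[OF r ev] by simp
      have l: "((\<lambda>h. (Ef c g h - Ef c g 0) / h) \<longlongrightarrow> 0) (at_left 0)"
      proof (rule Lim_transform_eventually[OF tendsto_const])
        show "\<forall>\<^sub>F h in at_left 0. 0 = (Ef c g h - Ef c g 0) / h"
          by (rule eventually_at_leftI[of "-1"]) (auto simp: Ef_def)
      qed
      show ?thesis using r' l filterlim_split_at by blast
    qed
    have "(Ef c g has_real_derivative 0) (at 0)"
      using lim by (simp add: DERIV_def)
    then show ?thesis using x0 by (simp add: Ef_def)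
  qed
qed

fun esum :: "(real \<times> real) list \<Rightarrow> real \<Rightarrow> real" where
  "esum [] x = 0"
| "esum ((c,g)#L) x = Ef c g x + esum L x"

fun elist :: "real \<Rightarrow> (real \<times> real) list \<Rightarrow> (real \<times> real) list" where
  "elist v [] = []"
| "elist w ((a,r)#L) = ((a*r)*w, r-1) # (a*w, r-2) # elist w L"

lemma Ef_scale: "Ef c g x * v = Ef (c * v) g x"
  by (simp add: Ef_def)

lemma esum_deriv: "(esum L has_real_derivative esum (elist 1 L) x) (at x)"
proof (induction L)
  case Nil then show ?case by simp
next
  case (Cons p L)
  obtain c g where p: "p = (c,g)" by (cases p)
  show ?case using DERIV_add[OF Ef_deriv[of c g x] Cons] p by (simp add: add.assoc)
qed

lemma esum_scale: "esum (elist 1 L) x * v = esum (elist v L) x"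
proof (induction L)
  case (Cons p L) then show ?case by (cases p) (simp add: Ef_def algebra_simps)
qed simp

lemma smooth_esum: "smooth_fun (esum L)"
proof (rule smooth_by_class[where P="\<lambda>g. \<exists>M. g = esum M"])
  fix g :: "real \<Rightarrow> real" assume "\<exists>L. g = esum L"
  then obtain L where g: "g = esum L" by blast
  have fd: "frechet_derivative g (at x) = (\<lambda>v. esum (elist v L) x)" for x
    using fd_real_D[OF esum_deriv[of L x]] g esum_scale by (simp add: mult.commute)
  show "(\<forall>x. g differentiable at x) \<and> (\<forall>v. \<exists>L. (\<lambda>x. frechet_derivative g (at x) v) = esum L)"
  proof (intro conjI allI)
    show "g differentiable at x" for x using esum_deriv g DERIV_differentiable by blast
    show "\<exists>La. (\<lambda>x. frechet_derivative g (at x) v) = esum La" for v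
      using fd by (intro exI[of _ "elist v L"]) auto
  qed
qed blast

definition F0 :: "real \<Rightarrow> real" where
  "F0 x = (if x > 0 then exp (-1/x) else 0)"

lemma smooth_F0: "smooth_fun F0"
proof -
  have "F0 x = esum [(1,0)] x" for x by (simp add: F0_def Ef_def)
  then show ?thesis using smooth_esum[of "[(1,0)]"] by (metis ext)
qed

definition vanish_left :: "(real \<Rightarrow> real) \<Rightarrow> bool" where
  "vanish_left g \<longleftrightarrow> (\<exists>a>0. \<forall>x\<le>a. g x = 0)"

fun tsum :: "(real \<times> real \<times> (real \<Rightarrow> real)) list \<Rightarrow> real \<Rightarrow> real" where
  "tsum [] x = 0"
| "tsum ((c,g,f)#L) x = c * x powr g * f x + tsum L x"

fun tlist :: "real \<Rightarrow> (real \<times> real \<times> (real \<Rightarrow> real)) list \<Rightarrow> (real \<times> real \<times> (real \<Rightarrow> real)) list" where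
  "tlist v [] = []"
| "tlist w ((a,r,f)#L) = ((a*r)*w, r-1, f) # (a*w, r, deriv f) # tlist w L"

lemma vanish_left_deriv:
  assumes "smooth_fun f" "vanish_left f"
  shows "vanish_left (deriv f)"
proof -
  obtain a where a: "a > 0" "\<forall>x\<le>a. f x = 0" using assms(2) vanish_left_def by blast
  have "deriv f x = 0" if "x \<le> a/2" for x
  proof -
    have "(f has_real_derivative 0) (at x)"
      apply (rule has_field_derivative_transform_within_open[where S="{..<a}" and f="\<lambda>x. 0"])
      using a that by auto
    then show ?thesis using DERIV_imp_deriv by blast
  qed
  then show ?thesis unfolding vanish_left_def using a by (intro exI[of _ "a/2"]) auto
qed

lemma term_deriv:
  assumes "smooth_fun f" "vanish_left f"
  shows "((\<lambda>x. c * x powr g * f x) has_real_derivative (c*g * x powr (g-1) * f x + c * x powr g * deriv f x)) (at x)"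
proof -
  obtain a where a: "a > 0" "\<forall>x\<le>a. f x = 0" using assms(2) vanish_left_def by blast
  show ?thesis
  proof (cases "x > 0")
    case True
    have "((\<lambda>x. c * x powr g * f x) has_real_derivative (c * (g * x powr (g-1)) * f x + c * x powr g * deriv f x)) (at x)"
      using DERIV_mult[OF DERIV_cmult[OF has_real_derivative_powr[OF True, of g], of c] smooth_DERIV[OF assms(1), of x]]
      by (simp add: algebra_simps)
    then show ?thesis by (simp add: algebra_simps)
  next
    case False
    have fx: "f x = 0" using a False by auto
    have dx: "deriv f x = 0"
    proof -
      have "(f has_real_derivative 0) (at x)"
        apply (rule has_field_derivative_transform_within_open[where S="{..<a}" and f="\<lambda>x. 0"])
        using a False by auto
      then show ?thesis using DERIV_imp_deriv by blast
    qed
    show ?thesis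
      apply (rule has_field_derivative_transform_within_open[where S="{..<a}" and f="\<lambda>x. 0"])
      using a False fx dx by auto
  qed
qed

lemma tsum_deriv:
  assumes "\<forall>(c,g,f)\<in>set L. smooth_fun f \<and> vanish_left f"
  shows "(tsum L has_real_derivative tsum (tlist 1 L) x) (at x)"
  using assms
proof (induction L)
  case Nil then show ?case by simp
next
  case (Cons p L)
  obtain c g f where p: "p = (c,g,f)" by (cases p)
  have "smooth_fun f" "vanish_left f" using Cons.prems p by auto
  then show ?case
    using DERIV_add[OF term_deriv[of f c g x] Cons.IH] Cons.prems p by (simp add: add.assoc)
qed

lemma tsum_scale: "tsum (tlist 1 L) x * v = tsum (tlist v L) x"
proof (induction L)
  case (Cons p L) then show ?case by (cases p) (simp add: algebra_simps)
qed simp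

lemma tlist_ok:
  assumes "\<forall>(c,g,f)\<in>set L. smooth_fun f \<and> vanish_left f"
  shows "\<forall>(c,g,f)\<in>set (tlist v L). smooth_fun f \<and> vanish_left f"
  using assms by (induction v L rule: tlist.induct) (auto simp: smooth_deriv_real vanish_left_deriv)

lemma smooth_tsum:
  assumes "\<forall>(c,g,f)\<in>set L. smooth_fun f \<and> vanish_left f"
  shows "smooth_fun (tsum L)"
proof (rule smooth_by_class[where P="\<lambda>h. \<exists>M. (\<forall>(c,g,f)\<in>set M. smooth_fun f \<and> vanish_left f) \<and> h = tsum M"])
  fix h :: "real \<Rightarrow> real" assume "\<exists>L. (\<forall>(c,g,f)\<in>set L. smooth_fun f \<and> vanish_left f) \<and> h = tsum L"
  then obtain L where L: "\<forall>(c,g,f)\<in>set L. smooth_fun f \<and> vanish_left f" and h: "h = tsum L" by blast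
  have fd: "frechet_derivative h (at x) = (\<lambda>v. tsum (tlist v L) x)" for x
    using fd_real_D[OF tsum_deriv[OF L, of x]] h tsum_scale by (simp add: mult.commute)
  show "(\<forall>x. h differentiable at x) \<and> (\<forall>v. \<exists>L. (\<forall>(c,g,f)\<in>set L. smooth_fun f \<and> vanish_left f) \<and> (\<lambda>x. frechet_derivative h (at x) v) = tsum L)"
  proof (intro conjI allI)
    show "h differentiable at x" for x using tsum_deriv[OF L] h DERIV_differentiable by blast
    show "\<exists>La. (\<forall>(c,g,f)\<in>set La. smooth_fun f \<and> vanish_left f) \<and> (\<lambda>x. frechet_derivative h (at x) v) = tsum La" for v
      using fd tlist_ok[OF L] by (intro exI[of _ "tlist v L"]) auto
  qed
qed (use assms in blast)

lemma smooth_powr_mult: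
  assumes "smooth_fun f" "vanish_left f"
  shows "smooth_fun (\<lambda>x. c * x powr g * f x)"
proof -
  have "smooth_fun (tsum [(c,g,f)])" by (rule smooth_tsum) (use assms in auto)
  then show ?thesis by (rule smooth_cong) simp
qed

lemma antider:
  fixes g :: "real \<Rightarrow> real"
  assumes cont: "continuous_on UNIV g" and nonneg: "\<And>s. 0 \<le> g s"
    and supp: "\<And>s. s \<le> 1 \<or> 2 \<le> s \<Longrightarrow> g s = 0"
  shows "((\<lambda>s. integral {0..s} g) has_real_derivative g s) (at s)"
    and "s \<le> 1 \<Longrightarrow> integral {0..s} g = 0"
    and "2 \<le> s \<Longrightarrow> integral {0..s} g = integral {0..2} g"
    and "0 \<le> integral {0..s} g"
    and "integral {0..s} g \<le> integral {0..2} g"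
proof -
  have int: "g integrable_on {a..b}" for a b
    by (rule integrable_continuous_interval) (rule continuous_on_subset[OF cont], simp)
  have z: "integral {0..s} g = 0" if "s \<le> 1" for s
  proof -
    have "integral {0..s} g = integral {0..s} (\<lambda>x. 0)"
      by (rule integral_cong) (use that supp in auto)
    then show ?thesis by simp
  qed
  then show "s \<le> 1 \<Longrightarrow> integral {0..s} g = 0" by blast
  have c2: "integral {0..s} g = integral {0..2} g" if "2 \<le> s" for s
  proof -
    have "integral {0..2} g + integral {2..s} g = integral {0..s} g"
      by (rule Henstock_Kurzweil_Integration.integral_combine) (use that int in auto)
    moreover have "integral {2..s} g = integral {2..s} (\<lambda>x. 0)"
      by (rule integral_cong) (use supp in auto)
    ultimately show ?thesis by simp
  qed
  then show "2 \<le> s \<Longrightarrow> integral {0..s} g = integral {0..2} g" by blast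
  have nn: "0 \<le> integral {0..s} g" for s
  proof (cases "0 \<le> s")
    case True then show ?thesis by (intro integral_nonneg int) (use nonneg in auto)
  next
    case False then show ?thesis using z by simp
  qed
  then show "0 \<le> integral {0..s} g" .
  show "integral {0..s} g \<le> integral {0..2} g"
  proof (cases "s \<le> 1")
    case True
    then show ?thesis using z[OF True] nn[of 2] by simp
  next
    case False
    show ?thesis
    proof (cases "s \<le> 2")
      case True
      have "integral {0..s} g + integral {s..2} g = integral {0..2} g"
        by (rule Henstock_Kurzweil_Integration.integral_combine) (use True False int in auto)
      moreover have "0 \<le> integral {s..2} g" by (intro integral_nonneg int) (use nonneg in auto)
      ultimately show ?thesis by simp
    next
      case False then show ?thesis using c2[of s] by simp
    qed
  qed
  show "((\<lambda>s. integral {0..s} g) has_real_derivative g s) (at s)"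
  proof (cases "s < 1")
    case True
    show ?thesis
      apply (rule has_field_derivative_transform_within_open[where S="{..<1}" and f="\<lambda>x. 0"])
      using True supp[of s] z by simp_all
  next
    case False
    have "((\<lambda>x. integral {0..x} g) has_real_derivative g s) (at s within {0..s+1})"
      by (rule integral_has_real_derivative) (rule continuous_on_subset[OF cont], simp, use False in simp)
    moreover have "at s within {0..s+1} = at s"
      by (rule at_within_interior) (use False in auto)
    ultimately show ?thesis by simp
  qed
qed

definition bump :: "real \<Rightarrow> real" where
  "bump s = F0 (s - 1) * F0 (2 - s)"

lemma F0_nonneg: "0 \<le> F0 x" by (simp add: F0_def)

lemma smooth_bump: "smooth_fun bump"
proof -
  have a: "smooth_fun (\<lambda>s. F0 ((\<lambda>s. s) s + (-1)))"
    by (rule smooth_comp_linear[OF smooth_F0 bounded_linear_ident])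
  have b: "smooth_fun (\<lambda>s. F0 ((\<lambda>s. - s) s + 2))"
    by (rule smooth_comp_linear[OF smooth_F0 bounded_linear_minus[OF bounded_linear_ident]])
  have "smooth_fun (\<lambda>s. F0 ((\<lambda>s. s) s + (-1)) * F0 ((\<lambda>s. - s) s + 2))"
    by (rule smooth_mult[OF a b])
  then show ?thesis by (rule smooth_cong) (simp add: bump_def)
qed

lemma bump_nonneg: "0 \<le> bump s" by (simp add: bump_def F0_nonneg)

lemma bump_supp: "s \<le> 1 \<or> 2 \<le> s \<Longrightarrow> bump s = 0"
  by (auto simp: bump_def F0_def)

lemma bump_cont: "continuous_on UNIV bump" by (rule smooth_cont[OF smooth_bump])

lemma vanish_left_bump: "vanish_left bump"
  unfolding vanish_left_def by (intro exI[of _ 1]) (auto simp: bump_supp)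

definition B2 :: real where "B2 = integral {0..2} bump"

lemma B2_pos: "0 < B2"
proof -
  have int: "bump integrable_on {0..2}"
    by (rule integrable_continuous_interval) (rule continuous_on_subset[OF bump_cont], simp)
  have nn: "0 \<le> B2" unfolding B2_def by (intro integral_nonneg int) (simp add: bump_nonneg)
  show ?thesis
  proof (rule ccontr)
    assume "\<not> 0 < B2"
    then have z: "B2 = 0" using nn by simp
    have "bump (3/2) = 0"
    proof (rule has_integral_0_cbox_imp_0[of 0 2 bump])
      show "continuous_on (cbox 0 2) bump" by (rule continuous_on_subset[OF bump_cont], simp)
      show "0 \<le> bump x" for x by (rule bump_nonneg)
      show "(bump has_integral 0) (cbox 0 (2::real))"
        using integrable_integral[OF int] z unfolding B2_def by simp
      show "box 0 (2::real) \<noteq> {}" by (simp add: box_real)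
      show "(3/2::real) \<in> cbox 0 2" by (simp add: box_real)
    qed
    moreover have "bump (3/2) > 0" by (simp add: bump_def F0_def)
    ultimately show False by simp
  qed
qed

lemmas bump_antider = antider[OF bump_cont bump_nonneg bump_supp]

definition eta :: "real \<Rightarrow> real" where
  "eta s = integral {0..s} bump / B2"

lemma eta_deriv: "(eta has_real_derivative bump s / B2) (at s)"
  unfolding eta_def[abs_def] by (rule DERIV_cdivide[OF bump_antider(1)])

lemma smooth_eta: "smooth_fun eta"
proof (rule smooth_antideriv[OF _ eta_deriv])
  show "smooth_fun (\<lambda>s. bump s / B2)"
    by (rule smooth_cong[OF smooth_mult[OF smooth_bump smooth_const[of "1/B2"]]]) simp
qed

lemma eta_0: "s \<le> 1 \<Longrightarrow> eta s = 0" by (simp add: eta_def bump_antider(2))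
lemma eta_1: "2 \<le> s \<Longrightarrow> eta s = 1"
  using B2_pos by (simp add: eta_def bump_antider(3) B2_def[symmetric])
lemma eta_bound: "\<bar>eta s\<bar> \<le> 1"
  using B2_pos bump_antider(4)[of s] bump_antider(5)[of s] by (simp add: eta_def B2_def[symmetric])

definition hh :: "real \<Rightarrow> real \<Rightarrow> real" where
  "hh a s = (1/B2) * s powr a * bump s"

lemma smooth_hh: "smooth_fun (hh a)"
  unfolding hh_def[abs_def] by (rule smooth_powr_mult[OF smooth_bump vanish_left_bump])

lemma hh_nonneg: "0 \<le> hh a s"
  using B2_pos by (simp add: hh_def bump_nonneg)

lemma hh_supp: "s \<le> 1 \<or> 2 \<le> s \<Longrightarrow> hh a s = 0"
  by (simp add: hh_def bump_supp)

lemmas hh_antider = antider[OF smooth_cont[OF smooth_hh] hh_nonneg hh_supp]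

definition zeta :: "real \<Rightarrow> real \<Rightarrow> real" where
  "zeta a s = integral {0..s} (hh a)"

lemma zeta_deriv: "(zeta a has_real_derivative hh a s) (at s)"
  unfolding zeta_def[abs_def] by (rule hh_antider(1))

lemma smooth_zeta: "smooth_fun (zeta a)"
  by (rule smooth_antideriv[OF smooth_hh zeta_deriv])

lemma zeta_0: "s \<le> 1 \<Longrightarrow> zeta a s = 0" by (simp add: zeta_def hh_antider(2))

lemma zeta_bound: "\<bar>zeta a s\<bar> \<le> zeta a 2"
  using hh_antider(4)[where a=a and s=s] hh_antider(5)[where a=a and s=s] by (simp add: zeta_def)

lemma vanish_left_zeta: "vanish_left (zeta a)"
  unfolding vanish_left_def by (intro exI[of _ 1]) (auto simp: zeta_0)

definition kappa :: "real \<Rightarrow> real \<Rightarrow> real" where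
  "kappa a s = s powr (-a) * zeta a s"

lemma smooth_kappa: "smooth_fun (kappa a)"
proof -
  have "smooth_fun (\<lambda>s. 1 * s powr (-a) * zeta a s)"
    by (rule smooth_powr_mult[OF smooth_zeta vanish_left_zeta])
  then show ?thesis by (rule smooth_cong) (simp add: kappa_def)
qed

lemma kappa_deriv:
  "(kappa a has_real_derivative (- a * s powr (-a-1) * zeta a s + s powr (-a) * hh a s)) (at s)"
proof -
  have "((\<lambda>s. 1 * s powr (-a) * zeta a s) has_real_derivative
     (1 * (-a) * s powr (-a-1) * zeta a s + 1 * s powr (-a) * deriv (zeta a) s)) (at s)"
    using term_deriv[OF smooth_zeta vanish_left_zeta, where c=1 and g="-a" and x=s] by simp
  moreover have "deriv (zeta a) s = hh a s" by (rule DERIV_imp_deriv[OF zeta_deriv])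
  ultimately show ?thesis unfolding kappa_def[abs_def] by simp
qed

lemma smooth_comp_fst:
  fixes \<theta> :: "real \<Rightarrow> real"
  assumes "smooth_fun \<theta>"
  shows "smooth_fun (\<lambda>x::'m::finite pt. \<theta> (c * fst x))"
proof -
  have bl: "bounded_linear (\<lambda>x::'m pt. c * fst x)"
    by (rule bounded_linear_compose[OF bounded_linear_mult_right bounded_linear_fst])
  have "smooth_fun (\<lambda>x::'m pt. \<theta> ((\<lambda>x. c * fst x) x + 0))"
    by (rule smooth_comp_linear[OF assms bl])
  then show ?thesis by simp
qed

lemma test_fun_mult:
  fixes \<theta> :: "real \<Rightarrow> real" and \<psi> :: "'m::finite pt \<Rightarrow> real"
  assumes "test_fun \<Omega> \<psi>" "smooth_fun \<theta>"
  shows "test_fun \<Omega> (\<lambda>x. \<psi> x * \<theta> (c * fst x))"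
proof -
  have s\<psi>: "smooth_fun \<psi>" and cpt: "compact (closure {x. \<psi> x \<noteq> 0})"
    and sub: "closure {x. \<psi> x \<noteq> 0} \<subseteq> \<Omega>" using assms(1) unfolding test_fun_def by auto
  have sub2: "closure {x. \<psi> x * \<theta> (c * fst x) \<noteq> 0} \<subseteq> closure {x. \<psi> x \<noteq> 0}"
    by (rule closure_mono) auto
  have "compact (closure {x. \<psi> x \<noteq> 0} \<inter> closure {x. \<psi> x * \<theta> (c * fst x) \<noteq> 0})"
    by (rule compact_Int_closed[OF cpt]) simp
  moreover have "closure {x. \<psi> x \<noteq> 0} \<inter> closure {x. \<psi> x * \<theta> (c * fst x) \<noteq> 0} = closure {x. \<psi> x * \<theta> (c * fst x) \<noteq> 0}"
    using sub2 by blast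
  ultimately show ?thesis unfolding test_fun_def
    using smooth_mult[OF s\<psi> smooth_comp_fst[OF assms(2)]] sub2 sub by auto
qed

lemma fd_mult_comp:
  fixes \<theta> :: "real \<Rightarrow> real" and \<psi> :: "'m::finite pt \<Rightarrow> real"
  assumes "smooth_fun \<psi>" "smooth_fun \<theta>"
  shows "frechet_derivative (\<lambda>x. \<psi> x * \<theta> (c * fst x)) (at x) =
     (\<lambda>v. \<psi> x * (deriv \<theta> (c * fst x) * (c * fst v)) + frechet_derivative \<psi> (at x) v * \<theta> (c * fst x))"
proof -
  have inner: "((\<lambda>x::'m pt. c * fst x) has_derivative (\<lambda>v. c * fst v)) (at x)"
    by (rule bounded_linear_imp_has_derivative[OF bounded_linear_compose[OF bounded_linear_mult_right bounded_linear_fst]])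
  have th: "(\<theta> has_derivative (\<lambda>u. deriv \<theta> (c * fst x) * u)) (at ((\<lambda>x::'m pt. c * fst x) x))"
    using smooth_DERIV[OF assms(2)] by (simp add: has_field_derivative_def)
  have comp: "((\<lambda>x. \<theta> (c * fst x)) has_derivative (\<lambda>v. deriv \<theta> (c * fst x) * (c * fst v))) (at x)"
    using has_derivative_compose[OF inner th] by simp
  have "((\<lambda>x. \<psi> x * \<theta> (c * fst x)) has_derivative
     (\<lambda>v. \<psi> x * (deriv \<theta> (c * fst x) * (c * fst v)) + frechet_derivative \<psi> (at x) v * \<theta> (c * fst x))) (at x)"
    using has_derivative_mult[OF smooth_has_derivative[OF assms(1)] comp] by simp
  then show ?thesis by (rule frechet_derivative_at[symmetric])
qed

lemma dx1_mult_comp: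
  fixes \<theta> :: "real \<Rightarrow> real" and \<psi> :: "'m::finite pt \<Rightarrow> real"
  assumes "smooth_fun \<psi>" "smooth_fun \<theta>"
  shows "dx1 (\<lambda>x. \<psi> x * \<theta> (c * fst x)) x = \<psi> x * deriv \<theta> (c * fst x) * c + dx1 \<psi> x * \<theta> (c * fst x)"
  unfolding dx1_def fd_mult_comp[OF assms] by simp

lemma dy_mult_comp:
  fixes \<theta> :: "real \<Rightarrow> real" and \<psi> :: "'m::finite pt \<Rightarrow> real"
  assumes "smooth_fun \<psi>" "smooth_fun \<theta>"
  shows "dy j (\<lambda>x. \<psi> x * \<theta> (c * fst x)) x = dy j \<psi> x * \<theta> (c * fst x)"
  unfolding dy_def fd_mult_comp[OF assms] by simp

lemma dx1w_eta:
  fixes \<psi> :: "'m::finite pt \<Rightarrow> real"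
  assumes "smooth_fun \<psi>"
  shows "dx1_weighted \<alpha> (\<lambda>x. \<psi> x * eta (c * fst x)) x =
    eta (c * fst x) * dx1_weighted \<alpha> \<psi> x + \<bar>fst x\<bar> powr \<alpha> * \<psi> x * (bump (c * fst x) / B2) * c"
proof -
  have "deriv eta (c * fst x) = bump (c * fst x) / B2" by (rule DERIV_imp_deriv[OF eta_deriv])
  then show ?thesis
    unfolding dx1_weighted_def dx1_mult_comp[OF assms smooth_eta] by (simp add: algebra_simps)
qed

lemma key_alg:
  fixes T P t s B a \<sigma> Z b d p :: real
  assumes "t > 0" "s > 0" "P > 0" "B \<noteq> 0"
  shows "a * \<sigma> * (T / t * (P / s)) * p * ((1/P) * Z) +
     T * P * (d * ((1/P) * Z) + p * ((- a * (1 / (P * s)) * Z + (1/P) * ((1/B) * P * b)) * (\<sigma> / t)))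
   = T * Z * d + p * (T * P) * (b / B) * (\<sigma> / t)"
  using assms by (simp add: field_simps)

lemma dx1w_kappa:
  fixes \<psi> :: "'m::finite pt \<Rightarrow> real"
  assumes "smooth_fun \<psi>" and t: "t > 0" and \<sigma>: "\<sigma> = 1 \<or> \<sigma> = -1"
  shows "dx1_weighted \<alpha> (\<lambda>x. \<psi> x * kappa \<alpha> ((\<sigma> / t) * fst x)) x =
    t powr \<alpha> * zeta \<alpha> ((\<sigma> / t) * fst x) * dx1 \<psi> x
    + \<psi> x * \<bar>fst x\<bar> powr \<alpha> * (bump ((\<sigma> / t) * fst x) / B2) * (\<sigma> / t)"
proof -
  define s where "s = (\<sigma> / t) * fst x"
  have dk: "deriv (kappa \<alpha>) s = - \<alpha> * s powr (-\<alpha>-1) * zeta \<alpha> s + s powr (-\<alpha>) * hh \<alpha> s"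
    by (rule DERIV_imp_deriv[OF kappa_deriv])
  have L: "dx1_weighted \<alpha> (\<lambda>x. \<psi> x * kappa \<alpha> ((\<sigma> / t) * fst x)) x =
     \<alpha> * sgn (fst x) * \<bar>fst x\<bar> powr (\<alpha> - 1) * \<psi> x * kappa \<alpha> s
     + \<bar>fst x\<bar> powr \<alpha> * (\<psi> x * deriv (kappa \<alpha>) s * (\<sigma> / t) + dx1 \<psi> x * kappa \<alpha> s)"
    unfolding dx1_weighted_def dx1_mult_comp[OF assms(1) smooth_kappa] s_def by (simp add: algebra_simps)
  show ?thesis
  proof (cases "s \<le> 1")
    case True
    have "zeta \<alpha> s = 0" "hh \<alpha> s = 0" "bump s = 0" using True zeta_0 hh_supp bump_supp by auto
    then show ?thesis unfolding L s_def[symmetric] using dk by (simp add: kappa_def)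
  next
    case False
    then have s1: "s > 0" by simp
    have x1: "fst x = \<sigma> * t * s" using \<sigma> t unfolding s_def by auto
    have ax: "\<bar>fst x\<bar> = t * s" using \<sigma> t s1 x1 by (auto simp: abs_mult)
    have sg: "sgn (fst x) = \<sigma>" using \<sigma> t s1 x1 by (auto simp: sgn_mult)
    have p1: "\<bar>fst x\<bar> powr (\<alpha> - 1) = t powr \<alpha> / t * (s powr \<alpha> / s)"
      unfolding ax using t s1 by (simp add: powr_mult powr_diff)
    have p2: "\<bar>fst x\<bar> powr \<alpha> = t powr \<alpha> * s powr \<alpha>"
      unfolding ax using t s1 by (simp add: powr_mult)
    have p3: "s powr (-\<alpha>) = 1 / s powr \<alpha>" using s1 by (simp add: powr_minus divide_inverse)
    have p4: "s powr (-\<alpha>-1) = 1 / (s powr \<alpha> * s)" using s1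
      by (simp add: powr_diff powr_minus divide_inverse)
    have hhs: "hh \<alpha> s = (1/B2) * s powr \<alpha> * bump s" by (simp add: hh_def)
    have ks: "kappa \<alpha> s = (1 / s powr \<alpha>) * zeta \<alpha> s" by (simp add: kappa_def p3)
    have "dx1_weighted \<alpha> (\<lambda>x. \<psi> x * kappa \<alpha> ((\<sigma> / t) * fst x)) x =
       \<alpha> * \<sigma> * (t powr \<alpha> / t * (s powr \<alpha> / s)) * \<psi> x * ((1 / s powr \<alpha>) * zeta \<alpha> s)
       + t powr \<alpha> * s powr \<alpha> * (dx1 \<psi> x * ((1 / s powr \<alpha>) * zeta \<alpha> s)
          + \<psi> x * ((- \<alpha> * (1 / (s powr \<alpha> * s)) * zeta \<alpha> s + (1 / s powr \<alpha>) * ((1/B2) * s powr \<alpha> * bump s)) * (\<sigma> / t)))"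
      unfolding L dk sg p1 p2 p3 p4 hhs ks by (simp add: algebra_simps)
    also have "\<dots> = t powr \<alpha> * zeta \<alpha> s * dx1 \<psi> x + \<psi> x * (t powr \<alpha> * s powr \<alpha>) * (bump s / B2) * (\<sigma> / t)"
      by (rule key_alg) (use t s1 B2_pos in auto)
    finally show ?thesis unfolding s_def[symmetric] p2 .
  qed
qed

lemma cont_meas: "continuous_on UNIV (f::'a::euclidean_space \<Rightarrow> real) \<Longrightarrow> f \<in> borel_measurable lebesgue"
  by (metis measurable_completion borel_measurable_continuous_onI measurable_lborel2)

lemma open_leb: "open (S::'a::euclidean_space set) \<Longrightarrow> S \<in> sets lebesgue"
  by simp

lemma tpow_lim: "0 < \<alpha> \<Longrightarrow> ((\<lambda>n::nat. (1 / real (Suc n)) powr \<alpha>) \<longlongrightarrow> 0) sequentially"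
  by real_asymp

lemma si_mult:
  fixes f g :: "'a \<Rightarrow> real"
  assumes "set_integrable M A f" "g \<in> borel_measurable M" "\<And>x. x \<in> A \<Longrightarrow> \<bar>g x\<bar> \<le> C"
  shows "set_integrable M A (\<lambda>x. g x * f x)"
  unfolding set_integrable_def
proof (rule Bochner_Integration.integrable_bound)
  show "integrable M (\<lambda>x. C * (indicat_real A x *\<^sub>R f x))"
    using assms(1) unfolding set_integrable_def by (rule integrable_mult_right)
  show "(\<lambda>x. indicat_real A x *\<^sub>R (g x * f x)) \<in> borel_measurable M"
    using borel_measurable_integrable[OF assms(1)[unfolded set_integrable_def]] assms(2)
    by (simp add: mult.left_commute)
  show "AE x in M. norm (indicat_real A x *\<^sub>R (g x * f x)) \<le> norm (C * (indicat_real A x *\<^sub>R f x))"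
  proof (rule AE_I2)
    fix x show "norm (indicat_real A x *\<^sub>R (g x * f x)) \<le> norm (C * (indicat_real A x *\<^sub>R f x))"
    proof (cases "x \<in> A")
      case True
      then have "\<bar>g x\<bar> \<le> \<bar>C\<bar>" using assms(3) by force
      then show ?thesis using True by (simp add: abs_mult mult_right_mono)
    qed simp
  qed
qed

lemma set_dct:
  fixes F :: "nat \<Rightarrow> 'a \<Rightarrow> real"
  assumes g: "set_integrable M A g" and Fi: "\<And>n. set_integrable M A (F n)" and Li: "set_integrable M A L"
    and bd: "\<And>n x. x \<in> A \<Longrightarrow> \<bar>F n x\<bar> \<le> g x"
    and lim: "\<And>x. x \<in> A \<Longrightarrow> (\<lambda>n. F n x) \<longlonglongrightarrow> L x"
  shows "(\<lambda>n. LINT x:A|M. F n x) \<longlonglongrightarrow> (LINT x:A|M. L x)"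
  unfolding set_lebesgue_integral_def
proof (rule integral_dominated_convergence[where w="\<lambda>x. indicat_real A x *\<^sub>R g x"])
  show "(\<lambda>x. indicat_real A x *\<^sub>R L x) \<in> borel_measurable M"
    using borel_measurable_integrable[OF Li[unfolded set_integrable_def]] .
  show "(\<lambda>x. indicat_real A x *\<^sub>R F n x) \<in> borel_measurable M" for n
    using borel_measurable_integrable[OF Fi[unfolded set_integrable_def]] .
  show "integrable M (\<lambda>x. indicat_real A x *\<^sub>R g x)" using g unfolding set_integrable_def .
  show "AE x in M. (\<lambda>n. indicat_real A x *\<^sub>R F n x) \<longlonglongrightarrow> indicat_real A x *\<^sub>R L x"
  proof (rule AE_I2)
    fix x show "(\<lambda>n. indicat_real A x *\<^sub>R F n x) \<longlonglongrightarrow> indicat_real A x *\<^sub>R L x"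
      by (cases "x \<in> A") (use lim in auto)
  qed
  show "AE x in M. norm (indicat_real A x *\<^sub>R F n x) \<le> indicat_real A x *\<^sub>R g x" for n
  proof (rule AE_I2)
    fix x show "norm (indicat_real A x *\<^sub>R F n x) \<le> indicat_real A x *\<^sub>R g x"
      by (cases "x \<in> A") (use bd in auto)
  qed
qed

lemma eta_lim:
  assumes "\<sigma> = 1 \<or> \<sigma> = -1"
  shows "(\<lambda>n. eta ((\<sigma> * real (Suc n)) * y)) \<longlonglongrightarrow> (if \<sigma> * y > 0 then 1 else 0)"
proof (cases "\<sigma> * y > 0")
  case True
  obtain N :: nat where N: "2 / (\<sigma> * y) < real N" using reals_Archimedean2 by blast
  have "eventually (\<lambda>n. eta ((\<sigma> * real (Suc n)) * y) = 1) sequentially"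
    unfolding eventually_sequentially
  proof (intro exI allI impI)
    fix n assume "N \<le> n"
    then have "2 / (\<sigma> * y) < real (Suc n)" using N by linarith
    then have "2 < real (Suc n) * (\<sigma> * y)" using True by (simp add: field_simps)
    then show "eta ((\<sigma> * real (Suc n)) * y) = 1" by (intro eta_1) (simp add: algebra_simps)
  qed
  then show ?thesis using True by (simp add: tendsto_eventually)
next
  case False
  have "eta ((\<sigma> * real (Suc n)) * y) = 0" for n
  proof (rule eta_0)
    have "real (Suc n) * (\<sigma> * y) \<le> 0" using False by (simp add: mult_nonneg_nonpos)
    then show "(\<sigma> * real (Suc n)) * y \<le> 1" by (simp add: algebra_simps)
  qed
  then show ?thesis using False by simp
qed

lemma dx1_cont:
  assumes "smooth_fun \<psi>"
  shows "continuous_on UNIV (dx1 \<psi>)"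
proof -
  have "dx1 \<psi> = (\<lambda>x. frechet_derivative \<psi> (at x) (1, 0))" by (simp add: dx1_def[abs_def])
  then show ?thesis using smooth_cont[OF smooth_deriv[OF assms]] by simp
qed

lemma dx1_outside:
  fixes \<psi> :: "'m::finite pt \<Rightarrow> real"
  assumes "smooth_fun \<psi>" "x \<notin> closure {x. \<psi> x \<noteq> 0}"
  shows "dx1 \<psi> x = 0"
proof -
  have "((\<lambda>x. 0::real) has_derivative (\<lambda>v. 0)) (at x)" by (rule has_derivative_const)
  then have "(\<psi> has_derivative (\<lambda>v. 0)) (at x)"
  proof (rule has_derivative_transform_within_open[where s="- closure {x. \<psi> x \<noteq> 0}"])
    show "open (- closure {x. \<psi> x \<noteq> 0})" by auto
    show "x \<in> - closure {x. \<psi> x \<noteq> 0}" using assms(2) by simp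
    show "0 = \<psi> y" if "y \<in> - closure {x. \<psi> x \<noteq> 0}" for y
      using that closure_subset[of "{x. \<psi> x \<noteq> 0}"] by auto
  qed
  then have "frechet_derivative \<psi> (at x) = (\<lambda>v. 0)" by (rule frechet_derivative_at[symmetric])
  then show ?thesis by (simp add: dx1_def)
qed

lemma f_dx1_integrable:
  fixes \<psi> f :: "'m::finite pt \<Rightarrow> real"
  assumes li: "loc_integrable \<Omega> f" and \<psi>: "test_fun \<Omega> \<psi>"
  shows "set_integrable lebesgue \<Omega> (\<lambda>x. f x * dx1 \<psi> x)"
proof -
  define K where "K = closure {x. \<psi> x \<noteq> 0}"
  have s\<psi>: "smooth_fun \<psi>" and cK: "compact K" and KO: "K \<subseteq> \<Omega>" using \<psi> unfolding test_fun_def K_def by simp_all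
  have fK: "set_integrable lebesgue K f" using li cK KO unfolding loc_integrable_def by blast
  have cd: "continuous_on UNIV (dx1 \<psi>)" by (rule dx1_cont[OF s\<psi>])
  have "compact (dx1 \<psi> ` K)" by (rule compact_continuous_image[OF continuous_on_subset[OF cd] cK]) simp
  then have "bounded (dx1 \<psi> ` K)" by (rule compact_imp_bounded)
  then obtain C where C0: "\<forall>y\<in>dx1 \<psi> ` K. \<bar>y\<bar> \<le> C" unfolding bounded_real by blast
  have C: "\<And>x. x \<in> K \<Longrightarrow> \<bar>dx1 \<psi> x\<bar> \<le> C" using C0 by simp
  have si: "set_integrable lebesgue K (\<lambda>x. dx1 \<psi> x * f x)"
    by (rule si_mult[OF fK cont_meas[OF cd] C])
  have pw: "indicat_real K x *\<^sub>R (dx1 \<psi> x * f x) = indicat_real \<Omega> x *\<^sub>R (f x * dx1 \<psi> x)" for x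
  proof (cases "x \<in> K")
    case True then show ?thesis using KO by auto
  next
    case False then have "dx1 \<psi> x = 0" by (intro dx1_outside[OF s\<psi>]) (simp add: K_def[symmetric])
    then show ?thesis using False by simp
  qed
  moreover have "(\<lambda>x. indicat_real K x *\<^sub>R (dx1 \<psi> x * f x)) = (\<lambda>x. indicat_real \<Omega> x *\<^sub>R (f x * dx1 \<psi> x))"
    by (rule ext) (rule pw)
  ultimately show ?thesis using si unfolding set_integrable_def by simp
qed

lemma wk_identity:
  assumes t: "t > 0" and \<sigma>: "\<sigma> = 1 \<or> \<sigma> = -1"
  shows "\<bar>y\<bar> powr \<alpha> * kappa \<alpha> ((\<sigma> / t) * y) = t powr \<alpha> * zeta \<alpha> ((\<sigma> / t) * y)"
proof (cases "(\<sigma> / t) * y \<le> 1")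
  case True then show ?thesis by (simp add: kappa_def zeta_0)
next
  case False
  define s where "s = (\<sigma> / t) * y"
  have s1: "s > 1" using False s_def by simp
  have y: "y = \<sigma> * t * s" using \<sigma> t unfolding s_def by auto
  have ay: "\<bar>y\<bar> = t * s" using \<sigma> t s1 y by (auto simp: abs_mult)
  have "\<bar>y\<bar> powr \<alpha> * kappa \<alpha> s = t powr \<alpha> * (s powr \<alpha> * s powr (-\<alpha>)) * zeta \<alpha> s"
    unfolding ay kappa_def using t s1 by (simp add: powr_mult)
  also have "s powr \<alpha> * s powr (-\<alpha>) = 1" using s1 by (simp add: powr_add[symmetric])
  finally show ?thesis unfolding s_def by simp
qed

lemma zeta_wbound:
  assumes t: "t > 0" and \<sigma>: "\<sigma> = 1 \<or> \<sigma> = -1" and a: "0 \<le> \<alpha>"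
  shows "\<bar>t powr \<alpha> * zeta \<alpha> ((\<sigma> / t) * y)\<bar> \<le> zeta \<alpha> 2 * \<bar>y\<bar> powr \<alpha>"
proof (cases "(\<sigma> / t) * y \<le> 1")
  case True then show ?thesis using zeta_bound[of \<alpha> 2] by (simp add: zeta_0)
next
  case False
  then have "t < \<bar>y\<bar>" using \<sigma> t by (auto simp: field_simps split: if_splits)
  then have "t powr \<alpha> \<le> \<bar>y\<bar> powr \<alpha>" using t a by (intro powr_mono2) auto
  moreover have "\<bar>zeta \<alpha> ((\<sigma> / t) * y)\<bar> \<le> zeta \<alpha> 2" by (rule zeta_bound)
  ultimately show ?thesis by (simp add: abs_mult mult.commute mult_mono)
qed

lemma ind_meas:
  fixes \<Omega> :: "'m::finite pt set"
  assumes "open \<Omega>"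
  shows "ind (\<Omega> \<inter> {x. \<sigma> * fst x > 0}) \<in> borel_measurable lebesgue"
    and "ind (\<Omega> \<inter> {x. \<sigma> * fst x > 0}) = indicator (\<Omega> \<inter> {x. \<sigma> * fst x > 0})"
proof -
  show eq: "ind (\<Omega> \<inter> {x. \<sigma> * fst x > 0}) = indicator (\<Omega> \<inter> {x. \<sigma> * fst x > 0})"
    by (rule ext) (simp add: ind_def indicator_def)
  have "open {x::'m pt. \<sigma> * fst x > 0}"
    by (rule open_Collect_less) (auto intro!: continuous_intros)
  then have "open (\<Omega> \<inter> {x. \<sigma> * fst x > 0})" using assms by blast
  then show "ind (\<Omega> \<inter> {x. \<sigma> * fst x > 0}) \<in> borel_measurable lebesgue"
    unfolding eq by (intro borel_measurable_indicator open_leb)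
qed

lemma trunc_x:
  fixes f D1 \<psi> :: "'m::finite pt \<Rightarrow> real" and Dy :: "'m pt \<Rightarrow> real^'m"
  assumes \<alpha>: "0 < \<alpha>" and \<Omega>o: "open \<Omega>" and li: "loc_integrable \<Omega> f"
    and wg: "weak_A_grad \<alpha> \<beta> \<Omega> f D1 Dy" and \<sigma>: "\<sigma> = 1 \<or> \<sigma> = -1" and \<psi>: "test_fun \<Omega> \<psi>"
  defines "S \<equiv> \<Omega> \<inter> {x. \<sigma> * fst x > 0}"
  shows "(LINT x:\<Omega>|lebesgue. ind S x * (f x * dx1_weighted \<alpha> \<psi> x)) =
       - (LINT x:\<Omega>|lebesgue. ind S x * (\<bar>fst x\<bar> powr \<alpha> * D1 x * \<psi> x))"
proof -
  define t where "t n = 1 / real (Suc n)" for n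
  define c where "c n = \<sigma> * real (Suc n)" for n
  have tpos: "t n > 0" for n by (simp add: t_def)
  have tle: "t n \<le> 1" for n by (simp add: t_def)
  have ct: "\<sigma> / t n = c n" for n by (simp add: t_def c_def)
  have s\<psi>: "smooth_fun \<psi>" using \<psi> test_fun_def by blast
  have indm: "ind S \<in> borel_measurable lebesgue" unfolding S_def by (rule ind_meas(1)[OF \<Omega>o])
  have indb: "\<bar>ind S x\<bar> \<le> 1" for x by (simp add: ind_def)
  have ind\<Omega>: "ind S x = (if \<sigma> * fst x > 0 then 1 else 0)" if "x \<in> \<Omega>" for x
    using that by (simp add: ind_def S_def)
  let ?w = "\<lambda>x::'m pt. \<bar>fst x\<bar> powr \<alpha>"
  have W: "set_integrable lebesgue \<Omega> (\<lambda>x. f x * dx1_weighted \<alpha> \<phi> x) \<and>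
        set_integrable lebesgue \<Omega> (\<lambda>x. ?w x * D1 x * \<phi> x) \<and>
        (LINT x:\<Omega>|lebesgue. f x * dx1_weighted \<alpha> \<phi> x) = - (LINT x:\<Omega>|lebesgue. ?w x * D1 x * \<phi> x)"
    if "test_fun \<Omega> \<phi>" for \<phi>
    using wg that unfolding weak_A_grad_def by blast
  have I1: "set_integrable lebesgue \<Omega> (\<lambda>x. f x * dx1_weighted \<alpha> \<psi> x)" using W[OF \<psi>] by blast
  have I2: "set_integrable lebesgue \<Omega> (\<lambda>x. ?w x * D1 x * \<psi> x)" using W[OF \<psi>] by blast
  have FD: "set_integrable lebesgue \<Omega> (\<lambda>x. f x * dx1 \<psi> x)" by (rule f_dx1_integrable[OF li \<psi>])
  have etam: "(\<lambda>x::'m pt. eta (c n * fst x)) \<in> borel_measurable lebesgue" for n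
    by (rule cont_meas[OF smooth_cont[OF smooth_comp_fst[OF smooth_eta]]])
  have zetam: "(\<lambda>x::'m pt. t n powr \<alpha> * zeta \<alpha> (c n * fst x)) \<in> borel_measurable lebesgue" for n
    by (rule cont_meas[OF smooth_cont[OF smooth_cmult[OF smooth_comp_fst[OF smooth_zeta]]]])
  have etab: "\<bar>eta (c n * fst x)\<bar> \<le> 1" for n x by (rule eta_bound)
  have zb: "\<bar>t n powr \<alpha> * zeta \<alpha> (c n * fst x)\<bar> \<le> zeta \<alpha> 2 * ?w x" for n x
    using zeta_wbound[OF tpos \<sigma>, of \<alpha> n "fst x"] \<alpha> ct by simp
  have Z2: "0 \<le> zeta \<alpha> 2" using zeta_bound[of \<alpha> 2] by simp
  have zb1: "\<bar>t n powr \<alpha> * zeta \<alpha> (c n * fst x)\<bar> \<le> zeta \<alpha> 2" for n x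
  proof -
    have "t n powr \<alpha> \<le> 1" using powr_mono2[of \<alpha> "t n" 1] tpos[of n] tle[of n] \<alpha> by simp
    moreover have "\<bar>zeta \<alpha> (c n * fst x)\<bar> \<le> zeta \<alpha> 2" by (rule zeta_bound)
    ultimately have "t n powr \<alpha> * \<bar>zeta \<alpha> (c n * fst x)\<bar> \<le> 1 * zeta \<alpha> 2"
      by (intro mult_mono) simp_all
    then show ?thesis by (simp add: abs_mult)
  qed
  define \<psi>A where "\<psi>A n x = \<psi> x * eta (c n * fst x)" for n x
  have tA: "test_fun \<Omega> (\<psi>A n)" for n unfolding \<psi>A_def by (rule test_fun_mult[OF \<psi> smooth_eta])
  define A where "A n x = eta (c n * fst x) * (f x * dx1_weighted \<alpha> \<psi> x)" for n x
  define B where "B n x = f x * (?w x * \<psi> x * (bump (c n * fst x) / B2) * c n)" for n x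
  define R where "R n x = eta (c n * fst x) * (?w x * D1 x * \<psi> x)" for n x
  have Ai: "set_integrable lebesgue \<Omega> (A n)" for n
    unfolding A_def by (rule si_mult[OF I1 etam etab])
  have Ri: "set_integrable lebesgue \<Omega> (R n)" for n
    unfolding R_def by (rule si_mult[OF I2 etam etab])
  have fA: "f x * dx1_weighted \<alpha> (\<psi>A n) x = A n x + B n x" for n x
    unfolding \<psi>A_def A_def B_def dx1w_eta[OF s\<psi>] by (simp add: algebra_simps)
  have RA: "?w x * D1 x * \<psi>A n x = R n x" for n x
    unfolding \<psi>A_def R_def by (simp add: algebra_simps)
  have Bi: "set_integrable lebesgue \<Omega> (B n)" for n
  proof -
    have "set_integrable lebesgue \<Omega> (\<lambda>x. f x * dx1_weighted \<alpha> (\<psi>A n) x - A n x)"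
      using set_integral_diff(1)[OF conjunct1[OF W[OF tA]] Ai] .
    then show ?thesis using fA by simp
  qed
  have BA: "(LINT x:\<Omega>|lebesgue. B n x) = - (LINT x:\<Omega>|lebesgue. R n x) - (LINT x:\<Omega>|lebesgue. A n x)" for n
  proof -
    have "(LINT x:\<Omega>|lebesgue. f x * dx1_weighted \<alpha> (\<psi>A n) x) = (LINT x:\<Omega>|lebesgue. A n x) + (LINT x:\<Omega>|lebesgue. B n x)"
      unfolding fA using set_integral_add(2)[OF Ai Bi] .
    moreover have "(LINT x:\<Omega>|lebesgue. f x * dx1_weighted \<alpha> (\<psi>A n) x) = - (LINT x:\<Omega>|lebesgue. R n x)"
      using W[OF tA] unfolding RA by simp
    ultimately show ?thesis by simp
  qed
  have limA: "(\<lambda>n. LINT x:\<Omega>|lebesgue. A n x) \<longlonglongrightarrow> (LINT x:\<Omega>|lebesgue. ind S x * (f x * dx1_weighted \<alpha> \<psi> x))"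
  proof (rule set_dct[OF set_integrable_abs[OF I1] Ai si_mult[OF I1 indm indb]])
    show "\<bar>A n x\<bar> \<le> \<bar>f x * dx1_weighted \<alpha> \<psi> x\<bar>" for n x
      unfolding A_def using etab[of n x] by (simp add: abs_mult mult_left_le_one_le)
    show "(\<lambda>n. A n x) \<longlonglongrightarrow> ind S x * (f x * dx1_weighted \<alpha> \<psi> x)" if "x \<in> \<Omega>" for x
      unfolding A_def ind\<Omega>[OF that] c_def by (intro tendsto_mult_right eta_lim[OF \<sigma>])
  qed
  have limR: "(\<lambda>n. LINT x:\<Omega>|lebesgue. R n x) \<longlonglongrightarrow> (LINT x:\<Omega>|lebesgue. ind S x * (?w x * D1 x * \<psi> x))"
  proof (rule set_dct[OF set_integrable_abs[OF I2] Ri si_mult[OF I2 indm indb]])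
    show "\<bar>R n x\<bar> \<le> \<bar>?w x * D1 x * \<psi> x\<bar>" for n x
      unfolding R_def using etab[of n x] by (simp add: abs_mult mult_left_le_one_le)
    show "(\<lambda>n. R n x) \<longlonglongrightarrow> ind S x * (?w x * D1 x * \<psi> x)" if "x \<in> \<Omega>" for x
      unfolding R_def ind\<Omega>[OF that] c_def by (intro tendsto_mult_right eta_lim[OF \<sigma>])
  qed
  have lim1: "(\<lambda>n. LINT x:\<Omega>|lebesgue. B n x) \<longlonglongrightarrow>
      - (LINT x:\<Omega>|lebesgue. ind S x * (?w x * D1 x * \<psi> x)) - (LINT x:\<Omega>|lebesgue. ind S x * (f x * dx1_weighted \<alpha> \<psi> x))"
    unfolding BA by (intro tendsto_diff tendsto_minus limA limR)
  define \<psi>B where "\<psi>B n x = \<psi> x * kappa \<alpha> ((\<sigma> / t n) * fst x)" for n x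
  have tB: "test_fun \<Omega> (\<psi>B n)" for n unfolding \<psi>B_def by (rule test_fun_mult[OF \<psi> smooth_kappa])
  define C where "C n x = t n powr \<alpha> * zeta \<alpha> (c n * fst x) * (f x * dx1 \<psi> x)" for n x
  define R' where "R' n x = t n powr \<alpha> * zeta \<alpha> (c n * fst x) * (D1 x * \<psi> x)" for n x
  have Ci: "set_integrable lebesgue \<Omega> (C n)" for n
    unfolding C_def by (rule si_mult[OF FD zetam zb1])
  have fB: "f x * dx1_weighted \<alpha> (\<psi>B n) x = C n x + B n x" for n x
    unfolding \<psi>B_def dx1w_kappa[OF s\<psi> tpos \<sigma>] unfolding ct C_def B_def by (simp add: algebra_simps)
  have RB: "?w x * D1 x * \<psi>B n x = R' n x" for n x
  proof -
    have "?w x * kappa \<alpha> ((\<sigma> / t n) * fst x) = t n powr \<alpha> * zeta \<alpha> ((\<sigma> / t n) * fst x)"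
      by (rule wk_identity[OF tpos \<sigma>])
    then show ?thesis unfolding \<psi>B_def R'_def ct by (simp add: algebra_simps)
  qed
  have R'i: "set_integrable lebesgue \<Omega> (R' n)" for n
  proof -
    have "set_integrable lebesgue \<Omega> (\<lambda>x. ?w x * D1 x * \<psi>B n x)" using W[OF tB] by blast
    then show ?thesis unfolding RB .
  qed
  have BC: "(LINT x:\<Omega>|lebesgue. B n x) = - (LINT x:\<Omega>|lebesgue. R' n x) - (LINT x:\<Omega>|lebesgue. C n x)" for n
  proof -
    have "(LINT x:\<Omega>|lebesgue. f x * dx1_weighted \<alpha> (\<psi>B n) x) = (LINT x:\<Omega>|lebesgue. C n x) + (LINT x:\<Omega>|lebesgue. B n x)"
      unfolding fB using set_integral_add(2)[OF Ci Bi] .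
    moreover have "(LINT x:\<Omega>|lebesgue. f x * dx1_weighted \<alpha> (\<psi>B n) x) = - (LINT x:\<Omega>|lebesgue. R' n x)"
      using W[OF tB] unfolding RB by simp
    ultimately show ?thesis by simp
  qed
  have tl: "(\<lambda>n. t n powr \<alpha>) \<longlonglongrightarrow> 0" unfolding t_def by (rule tpow_lim[OF \<alpha>])
  have zl: "(\<lambda>n. t n powr \<alpha> * zeta \<alpha> (c n * y)) \<longlonglongrightarrow> 0" for y
  proof (rule Lim_null_comparison[where g="\<lambda>n. t n powr \<alpha> * zeta \<alpha> 2"])
    show "\<forall>\<^sub>F n in sequentially. norm (t n powr \<alpha> * zeta \<alpha> (c n * y)) \<le> t n powr \<alpha> * zeta \<alpha> 2"
    proof (rule always_eventually, rule allI)
      fix n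
      have "\<bar>zeta \<alpha> (c n * y)\<bar> \<le> zeta \<alpha> 2" by (rule zeta_bound)
      then show "norm (t n powr \<alpha> * zeta \<alpha> (c n * y)) \<le> t n powr \<alpha> * zeta \<alpha> 2"
        by (simp add: abs_mult mult_left_mono)
    qed
    show "(\<lambda>n. t n powr \<alpha> * zeta \<alpha> 2) \<longlonglongrightarrow> 0"
      using tendsto_mult_right[OF tl, of "zeta \<alpha> 2"] by simp
  qed
  have zero_i: "set_integrable lebesgue \<Omega> (\<lambda>x. 0::real)" unfolding set_integrable_def by simp
  have limC: "(\<lambda>n. LINT x:\<Omega>|lebesgue. C n x) \<longlonglongrightarrow> (LINT x:\<Omega>|lebesgue. 0)"
  proof (rule set_dct[OF _ Ci zero_i])
    show "set_integrable lebesgue \<Omega> (\<lambda>x. zeta \<alpha> 2 * \<bar>f x * dx1 \<psi> x\<bar>)"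
      by (rule set_integrable_mult_right[OF set_integrable_abs[OF FD]])
    show "\<bar>C n x\<bar> \<le> zeta \<alpha> 2 * \<bar>f x * dx1 \<psi> x\<bar>" for n x
      unfolding C_def using zb1[of n x] by (simp add: abs_mult mult_right_mono)
    show "(\<lambda>n. C n x) \<longlonglongrightarrow> 0" for x
      unfolding C_def using tendsto_mult_right[OF zl[of "fst x"], of "f x * dx1 \<psi> x"] by simp
  qed
  have limR': "(\<lambda>n. LINT x:\<Omega>|lebesgue. R' n x) \<longlonglongrightarrow> (LINT x:\<Omega>|lebesgue. 0)"
  proof (rule set_dct[OF _ R'i zero_i])
    show "set_integrable lebesgue \<Omega> (\<lambda>x. zeta \<alpha> 2 * \<bar>?w x * D1 x * \<psi> x\<bar>)"
      by (rule set_integrable_mult_right[OF set_integrable_abs[OF I2]])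
    show "\<bar>R' n x\<bar> \<le> zeta \<alpha> 2 * \<bar>?w x * D1 x * \<psi> x\<bar>" for n x
    proof -
      have "\<bar>R' n x\<bar> = \<bar>t n powr \<alpha> * zeta \<alpha> (c n * fst x)\<bar> * \<bar>D1 x * \<psi> x\<bar>"
        unfolding R'_def by (simp add: abs_mult)
      also have "\<dots> \<le> (zeta \<alpha> 2 * ?w x) * \<bar>D1 x * \<psi> x\<bar>" by (rule mult_right_mono[OF zb]) simp
      also have "\<dots> = zeta \<alpha> 2 * \<bar>?w x * D1 x * \<psi> x\<bar>" by (simp add: abs_mult)
      finally show ?thesis .
    qed
    show "(\<lambda>n. R' n x) \<longlonglongrightarrow> 0" for x
      unfolding R'_def using tendsto_mult_right[OF zl[of "fst x"], of "D1 x * \<psi> x"] by simp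
  qed
  have lim2: "(\<lambda>n. LINT x:\<Omega>|lebesgue. B n x) \<longlonglongrightarrow> - (LINT x:\<Omega>|lebesgue. 0) - (LINT x:\<Omega>|lebesgue. 0)"
    unfolding BC by (intro tendsto_diff tendsto_minus limC limR')
  have "- (LINT x:\<Omega>|lebesgue. ind S x * (?w x * D1 x * \<psi> x)) - (LINT x:\<Omega>|lebesgue. ind S x * (f x * dx1_weighted \<alpha> \<psi> x))
      = - (LINT x:\<Omega>|lebesgue. (0::real)) - (LINT x:\<Omega>|lebesgue. 0)"
    by (rule LIMSEQ_unique[OF lim1 lim2])
  then show ?thesis by simp
qed

lemma trunc_y:
  fixes f D1 \<psi> :: "'m::finite pt \<Rightarrow> real" and Dy :: "'m pt \<Rightarrow> real^'m"
  assumes \<Omega>o: "open \<Omega>" and wg: "weak_A_grad \<alpha> \<beta> \<Omega> f D1 Dy" and \<sigma>: "\<sigma> = 1 \<or> \<sigma> = -1" and \<psi>: "test_fun \<Omega> \<psi>"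
  defines "S \<equiv> \<Omega> \<inter> {x. \<sigma> * fst x > 0}"
  shows "(LINT x:\<Omega>|lebesgue. ind S x * (f x * \<bar>fst x\<bar> powr \<beta> j * dy j \<psi> x)) =
       - (LINT x:\<Omega>|lebesgue. ind S x * (\<bar>fst x\<bar> powr \<beta> j * Dy x $ j * \<psi> x))"
proof -
  define c where "c n = \<sigma> * real (Suc n)" for n
  have s\<psi>: "smooth_fun \<psi>" using \<psi> test_fun_def by blast
  have indm: "ind S \<in> borel_measurable lebesgue" unfolding S_def by (rule ind_meas(1)[OF \<Omega>o])
  have indb: "\<bar>ind S x\<bar> \<le> 1" for x by (simp add: ind_def)
  have ind\<Omega>: "ind S x = (if \<sigma> * fst x > 0 then 1 else 0)" if "x \<in> \<Omega>" for x
    using that by (simp add: ind_def S_def)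
  have W: "set_integrable lebesgue \<Omega> (\<lambda>x. f x * \<bar>fst x\<bar> powr \<beta> j * dy j \<phi> x) \<and>
        set_integrable lebesgue \<Omega> (\<lambda>x. \<bar>fst x\<bar> powr \<beta> j * Dy x $ j * \<phi> x) \<and>
        (LINT x:\<Omega>|lebesgue. f x * \<bar>fst x\<bar> powr \<beta> j * dy j \<phi> x) = - (LINT x:\<Omega>|lebesgue. \<bar>fst x\<bar> powr \<beta> j * Dy x $ j * \<phi> x)"
    if "test_fun \<Omega> \<phi>" for \<phi>
    using wg that unfolding weak_A_grad_def by blast
  have I1: "set_integrable lebesgue \<Omega> (\<lambda>x. f x * \<bar>fst x\<bar> powr \<beta> j * dy j \<psi> x)" using W[OF \<psi>] by blast
  have I2: "set_integrable lebesgue \<Omega> (\<lambda>x. \<bar>fst x\<bar> powr \<beta> j * Dy x $ j * \<psi> x)" using W[OF \<psi>] by blast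
  have etam: "(\<lambda>x::'m pt. eta (c n * fst x)) \<in> borel_measurable lebesgue" for n
    by (rule cont_meas[OF smooth_cont[OF smooth_comp_fst[OF smooth_eta]]])
  have etab: "\<bar>eta (c n * fst x)\<bar> \<le> 1" for n x by (rule eta_bound)
  define \<psi>A where "\<psi>A n x = \<psi> x * eta (c n * fst x)" for n x
  have tA: "test_fun \<Omega> (\<psi>A n)" for n unfolding \<psi>A_def by (rule test_fun_mult[OF \<psi> smooth_eta])
  define A where "A n x = eta (c n * fst x) * (f x * \<bar>fst x\<bar> powr \<beta> j * dy j \<psi> x)" for n x
  define R where "R n x = eta (c n * fst x) * (\<bar>fst x\<bar> powr \<beta> j * Dy x $ j * \<psi> x)" for n x
  have Ai: "set_integrable lebesgue \<Omega> (A n)" for n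
    unfolding A_def by (rule si_mult[OF I1 etam etab])
  have Ri: "set_integrable lebesgue \<Omega> (R n)" for n
    unfolding R_def by (rule si_mult[OF I2 etam etab])
  have fA: "f x * \<bar>fst x\<bar> powr \<beta> j * dy j (\<psi>A n) x = A n x" for n x
    unfolding \<psi>A_def A_def dy_mult_comp[OF s\<psi> smooth_eta] by (simp add: algebra_simps)
  have RA: "\<bar>fst x\<bar> powr \<beta> j * Dy x $ j * \<psi>A n x = R n x" for n x
    unfolding \<psi>A_def R_def by (simp add: algebra_simps)
  have AR: "(LINT x:\<Omega>|lebesgue. A n x) = - (LINT x:\<Omega>|lebesgue. R n x)" for n
    using W[OF tA] unfolding fA RA by simp
  have limA: "(\<lambda>n. LINT x:\<Omega>|lebesgue. A n x) \<longlonglongrightarrow> (LINT x:\<Omega>|lebesgue. ind S x * (f x * \<bar>fst x\<bar> powr \<beta> j * dy j \<psi> x))"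
  proof (rule set_dct[OF set_integrable_abs[OF I1] Ai si_mult[OF I1 indm indb]])
    show "\<bar>A n x\<bar> \<le> \<bar>f x * \<bar>fst x\<bar> powr \<beta> j * dy j \<psi> x\<bar>" for n x
      unfolding A_def using etab[of n x] by (simp add: abs_mult mult_left_le_one_le)
    show "(\<lambda>n. A n x) \<longlonglongrightarrow> ind S x * (f x * \<bar>fst x\<bar> powr \<beta> j * dy j \<psi> x)" if "x \<in> \<Omega>" for x
      unfolding A_def ind\<Omega>[OF that] c_def by (intro tendsto_mult_right eta_lim[OF \<sigma>])
  qed
  have limR: "(\<lambda>n. LINT x:\<Omega>|lebesgue. R n x) \<longlonglongrightarrow> (LINT x:\<Omega>|lebesgue. ind S x * (\<bar>fst x\<bar> powr \<beta> j * Dy x $ j * \<psi> x))"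
  proof (rule set_dct[OF set_integrable_abs[OF I2] Ri si_mult[OF I2 indm indb]])
    show "\<bar>R n x\<bar> \<le> \<bar>\<bar>fst x\<bar> powr \<beta> j * Dy x $ j * \<psi> x\<bar>" for n x
      unfolding R_def using etab[of n x] by (simp add: abs_mult mult_left_le_one_le)
    show "(\<lambda>n. R n x) \<longlonglongrightarrow> ind S x * (\<bar>fst x\<bar> powr \<beta> j * Dy x $ j * \<psi> x)" if "x \<in> \<Omega>" for x
      unfolding R_def ind\<Omega>[OF that] c_def by (intro tendsto_mult_right eta_lim[OF \<sigma>])
  qed
  have limA': "(\<lambda>n. LINT x:\<Omega>|lebesgue. A n x) \<longlonglongrightarrow> - (LINT x:\<Omega>|lebesgue. ind S x * (\<bar>fst x\<bar> powr \<beta> j * Dy x $ j * \<psi> x))"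
    unfolding AR by (intro tendsto_minus limR)
  show ?thesis by (rule LIMSEQ_unique[OF limA limA'])
qed

lemma sbm_mult:
  fixes f :: "'a \<Rightarrow> 'b::euclidean_space"
  assumes "set_borel_measurable M A f" "g \<in> borel_measurable M"
  shows "set_borel_measurable M A (\<lambda>x. g x *\<^sub>R f x)"
proof -
  have "(\<lambda>x. g x *\<^sub>R (indicat_real A x *\<^sub>R f x)) \<in> borel_measurable M"
    by (rule borel_measurable_scaleR[OF assms(2) assms(1)[unfolded set_borel_measurable_def]])
  then show ?thesis unfolding set_borel_measurable_def by (simp add: ac_simps)
qed

lemma trunc_weak:
  fixes f D1 :: "'m::finite pt \<Rightarrow> real" and Dy :: "'m pt \<Rightarrow> real^'m"
  assumes \<alpha>: "0 < \<alpha>" and \<Omega>o: "open \<Omega>" and li: "loc_integrable \<Omega> f"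
    and wg: "weak_A_grad \<alpha> \<beta> \<Omega> f D1 Dy" and \<sigma>: "\<sigma> = 1 \<or> \<sigma> = -1"
  defines "S \<equiv> \<Omega> \<inter> {x. \<sigma> * fst x > 0}"
  shows "weak_A_grad \<alpha> \<beta> \<Omega> (\<lambda>x. f x * ind S x) (\<lambda>x. D1 x * ind S x) (\<lambda>x. ind S x *\<^sub>R Dy x)"
proof -
  have indm: "ind S \<in> borel_measurable lebesgue" unfolding S_def by (rule ind_meas(1)[OF \<Omega>o])
  have indb: "\<bar>ind S x\<bar> \<le> 1" for x by (simp add: ind_def)
  have m1: "set_borel_measurable lebesgue \<Omega> D1" and m2: "set_borel_measurable lebesgue \<Omega> Dy"
    using wg unfolding weak_A_grad_def by auto
  have M1: "set_borel_measurable lebesgue \<Omega> (\<lambda>x. D1 x * ind S x)"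
    using sbm_mult[OF m1 indm] by (simp add: ac_simps)
  have M2: "set_borel_measurable lebesgue \<Omega> (\<lambda>x. ind S x *\<^sub>R Dy x)"
    by (rule sbm_mult[OF m2 indm])
  have T: "set_integrable lebesgue \<Omega> (\<lambda>x. f x * ind S x * dx1_weighted \<alpha> \<psi> x) \<and>
        set_integrable lebesgue \<Omega> (\<lambda>x. \<bar>fst x\<bar> powr \<alpha> * (D1 x * ind S x) * \<psi> x) \<and>
        (LINT x:\<Omega>|lebesgue. f x * ind S x * dx1_weighted \<alpha> \<psi> x)
          = - (LINT x:\<Omega>|lebesgue. \<bar>fst x\<bar> powr \<alpha> * (D1 x * ind S x) * \<psi> x) \<and>
        (\<forall>j. set_integrable lebesgue \<Omega> (\<lambda>x. f x * ind S x * \<bar>fst x\<bar> powr \<beta> j * dy j \<psi> x) \<and>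
             set_integrable lebesgue \<Omega> (\<lambda>x. \<bar>fst x\<bar> powr \<beta> j * (ind S x *\<^sub>R Dy x) $ j * \<psi> x) \<and>
             (LINT x:\<Omega>|lebesgue. f x * ind S x * \<bar>fst x\<bar> powr \<beta> j * dy j \<psi> x)
               = - (LINT x:\<Omega>|lebesgue. \<bar>fst x\<bar> powr \<beta> j * (ind S x *\<^sub>R Dy x) $ j * \<psi> x))"
    if \<psi>: "test_fun \<Omega> \<psi>" for \<psi>
  proof -
    have W: "set_integrable lebesgue \<Omega> (\<lambda>x. f x * dx1_weighted \<alpha> \<psi> x)"
      "set_integrable lebesgue \<Omega> (\<lambda>x. \<bar>fst x\<bar> powr \<alpha> * D1 x * \<psi> x)"
      "\<And>j. set_integrable lebesgue \<Omega> (\<lambda>x. f x * \<bar>fst x\<bar> powr \<beta> j * dy j \<psi> x)"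
      "\<And>j. set_integrable lebesgue \<Omega> (\<lambda>x. \<bar>fst x\<bar> powr \<beta> j * Dy x $ j * \<psi> x)"
      using wg \<psi> unfolding weak_A_grad_def by blast+
    have e1: "(\<lambda>x. f x * ind S x * dx1_weighted \<alpha> \<psi> x) = (\<lambda>x. ind S x * (f x * dx1_weighted \<alpha> \<psi> x))"
      by (rule ext) (simp add: ac_simps)
    have e2: "(\<lambda>x. \<bar>fst x\<bar> powr \<alpha> * (D1 x * ind S x) * \<psi> x) = (\<lambda>x. ind S x * (\<bar>fst x\<bar> powr \<alpha> * D1 x * \<psi> x))"
      by (rule ext) (simp add: ac_simps)
    have e3: "(\<lambda>x. f x * ind S x * \<bar>fst x\<bar> powr \<beta> j * dy j \<psi> x) = (\<lambda>x. ind S x * (f x * \<bar>fst x\<bar> powr \<beta> j * dy j \<psi> x))" for j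
      by (rule ext) (simp add: ac_simps)
    have e4: "(\<lambda>x. \<bar>fst x\<bar> powr \<beta> j * (ind S x *\<^sub>R Dy x) $ j * \<psi> x) = (\<lambda>x. ind S x * (\<bar>fst x\<bar> powr \<beta> j * Dy x $ j * \<psi> x))" for j
      by (rule ext) (simp add: ac_simps)
    show ?thesis
      unfolding e1 e2 e3 e4
      using si_mult[OF W(1) indm indb] si_mult[OF W(2) indm indb] si_mult[OF W(3) indm indb] si_mult[OF W(4) indm indb]
        trunc_x[OF \<alpha> \<Omega>o li wg \<sigma> \<psi>] trunc_y[OF \<Omega>o wg \<sigma> \<psi>]
      unfolding S_def by blast
  qed
  show ?thesis unfolding weak_A_grad_def using M1 M2 T by blast
qed

lemma An_ind:
  "A_norm \<alpha> \<beta> (\<lambda>x. D1 x * ind S x) (\<lambda>x. ind S x *\<^sub>R Dy x) x = ind S x * A_norm \<alpha> \<beta> D1 Dy x"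
  by (cases "x \<in> S") (simp_all add: A_norm_def ind_def)

lemma ind_eq: "ind S = indicator S" by (rule ext) (simp add: ind_def indicator_def)

lemma trunc_Lp:
  fixes D1 :: "'m::finite pt \<Rightarrow> real" and Dy :: "'m pt \<Rightarrow> real^'m"
  assumes p: "0 < p" and SO: "S \<subseteq> \<Omega>" and Sm: "S \<in> sets lebesgue" and Lp: "A_norm_Lp p \<alpha> \<beta> \<Omega> D1 Dy"
  shows "A_norm_Lp p \<alpha> \<beta> S (\<lambda>x. D1 x * ind S x) (\<lambda>x. ind S x *\<^sub>R Dy x)"
proof -
  let ?N = "A_norm \<alpha> \<beta> D1 Dy"
  have m: "(\<lambda>x. indicat_real \<Omega> x *\<^sub>R ?N x) \<in> borel_measurable lebesgue"
    and i: "integrable lebesgue (\<lambda>x. indicat_real \<Omega> x *\<^sub>R ?N x powr p)"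
    using Lp unfolding A_norm_Lp_def set_borel_measurable_def set_integrable_def by auto
  have im: "indicat_real S \<in> borel_measurable lebesgue" using Sm by simp
  have e1: "indicat_real S x *\<^sub>R A_norm \<alpha> \<beta> (\<lambda>x. D1 x * ind S x) (\<lambda>x. ind S x *\<^sub>R Dy x) x
      = indicat_real S x * (indicat_real \<Omega> x *\<^sub>R ?N x)" for x
    using SO by (cases "x \<in> S") (auto simp: A_norm_def ind_def indicator_def)
  have e2: "indicat_real S x *\<^sub>R A_norm \<alpha> \<beta> (\<lambda>x. D1 x * ind S x) (\<lambda>x. ind S x *\<^sub>R Dy x) x powr p
      = indicat_real S x * (indicat_real \<Omega> x *\<^sub>R ?N x powr p)" for x
    using SO p by (cases "x \<in> S") (auto simp: A_norm_def ind_def indicator_def)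
  have "(\<lambda>x. indicat_real S x * (indicat_real \<Omega> x *\<^sub>R ?N x)) \<in> borel_measurable lebesgue"
    using im m by (rule borel_measurable_times)
  moreover have "integrable lebesgue (\<lambda>x. indicat_real S x * (indicat_real \<Omega> x *\<^sub>R ?N x powr p))"
    using integrable_mult_indicator[OF Sm i] by simp
  ultimately show ?thesis
    unfolding A_norm_Lp_def set_borel_measurable_def set_integrable_def e1 e2 by simp
qed

lemma hyper_null: "{x::'m::finite pt. fst x = 0} \<in> null_sets lebesgue"
proof -
  have b: "(1::real, 0::real^'m) \<in> Basis" by (simp add: Basis_prod_def)
  have e: "{x::'m pt. x \<bullet> (1, 0) = 0} = {x. fst x = 0}" by (auto simp: inner_prod_def)
  have "negligible {x::'m pt. x \<bullet> (1, 0) = 0}" by (rule negligible_standard_hyperplane[OF b])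
  then show ?thesis unfolding e negligible_iff_null_sets .
qed

lemma Omega_pm:
  "Omega_plus \<Omega> = \<Omega> \<inter> {x. 1 * fst x > 0}" "Omega_minus \<Omega> = \<Omega> \<inter> {x. (-1) * fst x > 0}"
  by (auto simp: Omega_plus_def Omega_minus_def)

lemma split_int:
  fixes F :: "'m::finite pt \<Rightarrow> real"
  assumes \<Omega>o: "open \<Omega>" and F: "set_integrable lebesgue \<Omega> F"
  shows "(LINT x:\<Omega>|lebesgue. ind (Omega_plus \<Omega>) x * F x) + (LINT x:\<Omega>|lebesgue. ind (Omega_minus \<Omega>) x * F x)
       = (LINT x:\<Omega>|lebesgue. F x)"
proof -
  have m1: "ind (Omega_plus \<Omega>) \<in> borel_measurable lebesgue" unfolding Omega_pm by (rule ind_meas(1)[OF \<Omega>o])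
  have m2: "ind (Omega_minus \<Omega>) \<in> borel_measurable lebesgue" unfolding Omega_pm by (rule ind_meas(1)[OF \<Omega>o])
  have b: "\<bar>ind A x\<bar> \<le> 1" for A x by (simp add: ind_def)
  have i1: "set_integrable lebesgue \<Omega> (\<lambda>x. ind (Omega_plus \<Omega>) x * F x)" by (rule si_mult[OF F m1 b])
  have i2: "set_integrable lebesgue \<Omega> (\<lambda>x. ind (Omega_minus \<Omega>) x * F x)" by (rule si_mult[OF F m2 b])
  have "(LINT x:\<Omega>|lebesgue. ind (Omega_plus \<Omega>) x * F x) + (LINT x:\<Omega>|lebesgue. ind (Omega_minus \<Omega>) x * F x)
      = (LINT x:\<Omega>|lebesgue. ind (Omega_plus \<Omega>) x * F x + ind (Omega_minus \<Omega>) x * F x)"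
    by (rule set_integral_add(2)[OF i1 i2, symmetric])
  also have "\<dots> = (LINT x:\<Omega>|lebesgue. F x)"
    unfolding set_lebesgue_integral_def
  proof (rule integral_cong_AE)
    show "(\<lambda>x. indicat_real \<Omega> x *\<^sub>R (ind (Omega_plus \<Omega>) x * F x + ind (Omega_minus \<Omega>) x * F x)) \<in> borel_measurable lebesgue"
      using borel_measurable_integrable[OF set_integral_add(1)[OF i1 i2, unfolded set_integrable_def]] .
    show "(\<lambda>x. indicat_real \<Omega> x *\<^sub>R F x) \<in> borel_measurable lebesgue"
      using borel_measurable_integrable[OF F[unfolded set_integrable_def]] .
    show "AE x in lebesgue. indicat_real \<Omega> x *\<^sub>R (ind (Omega_plus \<Omega>) x * F x + ind (Omega_minus \<Omega>) x * F x)
        = indicat_real \<Omega> x *\<^sub>R F x"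
    proof (rule eventually_mono[OF AE_not_in[OF hyper_null]])
      fix x :: "'m pt" assume "x \<notin> {x. fst x = 0}"
      then have "fst x \<noteq> 0" by simp
      then show "indicat_real \<Omega> x *\<^sub>R (ind (Omega_plus \<Omega>) x * F x + ind (Omega_minus \<Omega>) x * F x)
        = indicat_real \<Omega> x *\<^sub>R F x"
        by (cases "x \<in> \<Omega>") (auto simp: ind_def Omega_plus_def Omega_minus_def)
    qed
  qed
  finally show ?thesis .
qed

lemma energy_trunc:
  assumes p: "0 < p"
  shows "energy p \<alpha> \<beta> \<Omega> (\<lambda>x. D1 x * ind S x) (\<lambda>x. ind S x *\<^sub>R Dy x)
     = (1 / p) * (LINT x:\<Omega>|lebesgue. ind S x * A_norm \<alpha> \<beta> D1 Dy x powr p)"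
proof -
  have "A_norm \<alpha> \<beta> (\<lambda>x. D1 x * ind S x) (\<lambda>x. ind S x *\<^sub>R Dy x) x powr p = ind S x * A_norm \<alpha> \<beta> D1 Dy x powr p" for x
    unfolding An_ind using p by (simp add: ind_def)
  then show ?thesis unfolding energy_def by simp
qed

lemma energy_split:
  fixes D1 :: "'m::finite pt \<Rightarrow> real" and Dy :: "'m pt \<Rightarrow> real^'m"
  assumes p: "0 < p" and \<Omega>o: "open \<Omega>" and Lp: "A_norm_Lp p \<alpha> \<beta> \<Omega> D1 Dy"
  shows "energy p \<alpha> \<beta> \<Omega> D1 Dy =
          energy p \<alpha> \<beta> \<Omega> (\<lambda>x. D1 x * ind (Omega_plus \<Omega>) x) (\<lambda>x. ind (Omega_plus \<Omega>) x *\<^sub>R Dy x)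
        + energy p \<alpha> \<beta> \<Omega> (\<lambda>x. D1 x * ind (Omega_minus \<Omega>) x) (\<lambda>x. ind (Omega_minus \<Omega>) x *\<^sub>R Dy x)"
proof -
  have i: "set_integrable lebesgue \<Omega> (\<lambda>x. A_norm \<alpha> \<beta> D1 Dy x powr p)" using Lp A_norm_Lp_def by blast
  show ?thesis unfolding energy_trunc[OF p] using split_int[OF \<Omega>o i]
    by (simp add: energy_def add_divide_distrib[symmetric])
qed

lemma cs_bound:
  fixes D1 G1 :: "'m::finite pt \<Rightarrow> real" and Dy Gy :: "'m pt \<Rightarrow> real^'m"
  shows "\<bar>\<bar>fst x\<bar> powr \<alpha> * D1 x * G1 x + (\<Sum>j\<in>UNIV. \<bar>fst x\<bar> powr \<beta> j * Dy x $ j * Gy x $ j)\<bar>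
     \<le> A_norm \<alpha> \<beta> D1 Dy x * A_norm \<alpha> \<beta> G1 Gy x"
proof -
  let ?a = "\<bar>fst x\<bar> powr \<alpha>" and ?b = "\<lambda>j. \<bar>fst x\<bar> powr \<beta> j"
  define U :: "real \<times> (real^'m)" where "U = (sqrt ?a * D1 x, \<chi> j. sqrt (?b j) * Dy x $ j)"
  define V :: "real \<times> (real^'m)" where "V = (sqrt ?a * G1 x, \<chi> j. sqrt (?b j) * Gy x $ j)"
  have sq: "sqrt (?a) * sqrt (?a) = ?a" "\<And>j. sqrt (?b j) * sqrt (?b j) = ?b j"
    by (simp_all add: real_sqrt_mult[symmetric])
  have UV: "U \<bullet> V = ?a * D1 x * G1 x + (\<Sum>j\<in>UNIV. ?b j * Dy x $ j * Gy x $ j)"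
  proof -
    have "U \<bullet> V = (sqrt ?a * sqrt ?a) * D1 x * G1 x + (\<Sum>j\<in>UNIV. (sqrt (?b j) * sqrt (?b j)) * Dy x $ j * Gy x $ j)"
      unfolding U_def V_def by (simp add: inner_prod_def inner_vec_def algebra_simps)
    then show ?thesis unfolding sq .
  qed
  have UU: "norm U = A_norm \<alpha> \<beta> D1 Dy x"
  proof -
    have "U \<bullet> U = (sqrt ?a * sqrt ?a) * (D1 x)\<^sup>2 + (\<Sum>j\<in>UNIV. (sqrt (?b j) * sqrt (?b j)) * (Dy x $ j)\<^sup>2)"
      unfolding U_def by (simp add: inner_prod_def inner_vec_def algebra_simps power2_eq_square)
    then show ?thesis unfolding sq norm_eq_sqrt_inner A_norm_def by simp
  qed
  have VV: "norm V = A_norm \<alpha> \<beta> G1 Gy x"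
  proof -
    have "V \<bullet> V = (sqrt ?a * sqrt ?a) * (G1 x)\<^sup>2 + (\<Sum>j\<in>UNIV. (sqrt (?b j) * sqrt (?b j)) * (Gy x $ j)\<^sup>2)"
      unfolding V_def by (simp add: inner_prod_def inner_vec_def algebra_simps power2_eq_square)
    then show ?thesis unfolding sq norm_eq_sqrt_inner A_norm_def by simp
  qed
  show ?thesis using Cauchy_Schwarz_ineq2[of U V] unfolding UV UU VV .
qed

lemma pow_bound:
  fixes N M p :: real
  assumes "0 \<le> N" "0 \<le> M" "1 < p"
  shows "N powr (p-2) * (N * M) \<le> N powr p + M powr p"
proof (cases "N = 0")
  case True then show ?thesis by simp
next
  case False
  then have N: "N > 0" using assms by simp
  have pe: "X powr q * X = X powr (q + 1)" if "X > 0" for X q :: real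
    using that by (simp add: powr_add)
  have e: "N powr (p-2) * N = N powr (p-1)" using pe[OF N, of "p-2"] by simp
  show ?thesis
  proof (cases "M \<le> N")
    case True
    have "N powr (p-2) * (N * M) = N powr (p-1) * M" using e by (simp add: mult.assoc[symmetric])
    also have "\<dots> \<le> N powr (p-1) * N" by (rule mult_left_mono[OF True]) simp
    also have "\<dots> = N powr p" using pe[OF N, of "p-1"] by simp
    finally show ?thesis using powr_ge_zero[of M p] powr_ge_zero[of N p] by linarith
  next
    case False
    have "N powr (p-2) * (N * M) = N powr (p-1) * M" using e by (simp add: mult.assoc[symmetric])
    also have "\<dots> \<le> M powr (p-1) * M" by (rule mult_right_mono[OF powr_mono2]) (use False assms in auto)
    also have "\<dots> = M powr p" using pe[of M "p-1"] False assms by simp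
    finally show ?thesis using powr_ge_zero[of M p] powr_ge_zero[of N p] by linarith
  qed
qed

lemma integrand_bound:
  fixes D1 G1 :: "'m::finite pt \<Rightarrow> real" and Dy Gy :: "'m pt \<Rightarrow> real^'m"
  assumes "1 < p"
  shows "\<bar>A_norm \<alpha> \<beta> D1 Dy x powr (p - 2) *
        (\<bar>fst x\<bar> powr \<alpha> * D1 x * G1 x + (\<Sum>j\<in>UNIV. \<bar>fst x\<bar> powr \<beta> j * Dy x $ j * Gy x $ j))\<bar>
     \<le> A_norm \<alpha> \<beta> D1 Dy x powr p + A_norm \<alpha> \<beta> G1 Gy x powr p"
proof -
  let ?N = "A_norm \<alpha> \<beta> D1 Dy x" and ?M = "A_norm \<alpha> \<beta> G1 Gy x"
  have "\<bar>?N powr (p - 2) * (\<bar>fst x\<bar> powr \<alpha> * D1 x * G1 x + (\<Sum>j\<in>UNIV. \<bar>fst x\<bar> powr \<beta> j * Dy x $ j * Gy x $ j))\<bar>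
     = ?N powr (p - 2) * \<bar>\<bar>fst x\<bar> powr \<alpha> * D1 x * G1 x + (\<Sum>j\<in>UNIV. \<bar>fst x\<bar> powr \<beta> j * Dy x $ j * Gy x $ j)\<bar>"
    by (simp add: abs_mult)
  also have "\<dots> \<le> ?N powr (p - 2) * (?N * ?M)" by (rule mult_left_mono[OF cs_bound]) simp
  also have "\<dots> \<le> ?N powr p + ?M powr p" by (rule pow_bound) (use assms in \<open>auto simp: A_norm_def intro!: add_nonneg_nonneg sum_nonneg\<close>)
  finally show ?thesis .
qed

lemma I_integrable:
  fixes D1 G1 :: "'m::finite pt \<Rightarrow> real" and Dy Gy :: "'m pt \<Rightarrow> real^'m"
  assumes p: "1 < p" and LpD: "A_norm_Lp p \<alpha> \<beta> \<Omega> D1 Dy" and LpG: "A_norm_Lp p \<alpha> \<beta> \<Omega> G1 Gy"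
    and mD1: "set_borel_measurable lebesgue \<Omega> D1" and mDy: "set_borel_measurable lebesgue \<Omega> Dy"
    and mG1: "set_borel_measurable lebesgue \<Omega> G1" and mGy: "set_borel_measurable lebesgue \<Omega> Gy"
  shows "set_integrable lebesgue \<Omega> (\<lambda>x. A_norm \<alpha> \<beta> D1 Dy x powr (p - 2) *
        (\<bar>fst x\<bar> powr \<alpha> * D1 x * G1 x + (\<Sum>j\<in>UNIV. \<bar>fst x\<bar> powr \<beta> j * Dy x $ j * Gy x $ j)))"
proof -
  let ?N = "A_norm \<alpha> \<beta> D1 Dy"
  define iN where "iN x = indicat_real \<Omega> x *\<^sub>R ?N x" for x
  define iD1 where "iD1 x = indicat_real \<Omega> x *\<^sub>R D1 x" for x
  define iG1 where "iG1 x = indicat_real \<Omega> x *\<^sub>R G1 x" for x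
  define iDy where "iDy x = indicat_real \<Omega> x *\<^sub>R Dy x" for x
  define iGy where "iGy x = indicat_real \<Omega> x *\<^sub>R Gy x" for x
  have miN: "iN \<in> borel_measurable lebesgue"
    using LpD unfolding A_norm_Lp_def set_borel_measurable_def iN_def[abs_def] by blast
  have miD1: "iD1 \<in> borel_measurable lebesgue" using mD1 unfolding set_borel_measurable_def iD1_def[abs_def] .
  have miG1: "iG1 \<in> borel_measurable lebesgue" using mG1 unfolding set_borel_measurable_def iG1_def[abs_def] .
  have miDy: "iDy \<in> borel_measurable lebesgue" using mDy unfolding set_borel_measurable_def iDy_def[abs_def] .
  have miGy: "iGy \<in> borel_measurable lebesgue" using mGy unfolding set_borel_measurable_def iGy_def[abs_def] .
  have mfst: "(\<lambda>x::'m pt. fst x) \<in> borel_measurable lebesgue"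
    by (rule cont_meas) (intro continuous_intros)
  have mw: "(\<lambda>x::'m pt. \<bar>fst x\<bar> powr a) \<in> borel_measurable lebesgue" for a
    by (rule measurable_abs_powr[OF mfst])
  have mDj: "(\<lambda>x. iDy x $ j) \<in> borel_measurable lebesgue" for j
    by (rule measurable_compose[OF miDy borel_measurable_nth])
  have mGj: "(\<lambda>x. iGy x $ j) \<in> borel_measurable lebesgue" for j
    by (rule measurable_compose[OF miGy borel_measurable_nth])
  have mpow: "(\<lambda>x. iN x powr (p - 2)) \<in> borel_measurable lebesgue"
    by (rule powr_real_measurable[OF miN borel_measurable_const])
  have m1: "(\<lambda>x. \<bar>fst x\<bar> powr \<alpha> * iD1 x * iG1 x) \<in> borel_measurable lebesgue"
    by (intro borel_measurable_times mw miD1 miG1)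
  have m2: "(\<lambda>x. \<Sum>j\<in>UNIV. \<bar>fst x\<bar> powr \<beta> j * iDy x $ j * iGy x $ j) \<in> borel_measurable lebesgue"
    by (intro borel_measurable_sum borel_measurable_times mw mDj mGj)
  have mall: "(\<lambda>x. iN x powr (p - 2) * (\<bar>fst x\<bar> powr \<alpha> * iD1 x * iG1 x + (\<Sum>j\<in>UNIV. \<bar>fst x\<bar> powr \<beta> j * iDy x $ j * iGy x $ j)))
      \<in> borel_measurable lebesgue"
    by (intro borel_measurable_times borel_measurable_add mpow m1 m2)
  have eq: "indicat_real \<Omega> x *\<^sub>R (?N x powr (p - 2) *
        (\<bar>fst x\<bar> powr \<alpha> * D1 x * G1 x + (\<Sum>j\<in>UNIV. \<bar>fst x\<bar> powr \<beta> j * Dy x $ j * Gy x $ j)))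
      = iN x powr (p - 2) * (\<bar>fst x\<bar> powr \<alpha> * iD1 x * iG1 x + (\<Sum>j\<in>UNIV. \<bar>fst x\<bar> powr \<beta> j * iDy x $ j * iGy x $ j))" for x
    by (cases "x \<in> \<Omega>") (simp_all add: iN_def iD1_def iG1_def iDy_def iGy_def)
  have sbm: "set_borel_measurable lebesgue \<Omega> (\<lambda>x. ?N x powr (p - 2) *
        (\<bar>fst x\<bar> powr \<alpha> * D1 x * G1 x + (\<Sum>j\<in>UNIV. \<bar>fst x\<bar> powr \<beta> j * Dy x $ j * Gy x $ j)))"
    unfolding set_borel_measurable_def eq using mall .
  have hi: "set_integrable lebesgue \<Omega> (\<lambda>x. ?N x powr p + A_norm \<alpha> \<beta> G1 Gy x powr p)"
    using LpD LpG unfolding A_norm_Lp_def by (intro set_integral_add(1)) auto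
  show ?thesis
  proof (rule set_integrable_bound[OF hi sbm])
    show "AE x\<in>\<Omega> in lebesgue. norm (?N x powr (p - 2) *
        (\<bar>fst x\<bar> powr \<alpha> * D1 x * G1 x + (\<Sum>j\<in>UNIV. \<bar>fst x\<bar> powr \<beta> j * Dy x $ j * Gy x $ j)))
        \<le> norm (?N x powr p + A_norm \<alpha> \<beta> G1 Gy x powr p)"
    proof (rule AE_I2, rule impI)
      fix x
      have "0 \<le> ?N x powr p + A_norm \<alpha> \<beta> G1 Gy x powr p" by simp
      then show "norm (?N x powr (p - 2) *
        (\<bar>fst x\<bar> powr \<alpha> * D1 x * G1 x + (\<Sum>j\<in>UNIV. \<bar>fst x\<bar> powr \<beta> j * Dy x $ j * Gy x $ j)))
        \<le> norm (?N x powr p + A_norm \<alpha> \<beta> G1 Gy x powr p)"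
        using integrand_bound[OF p, of \<alpha> \<beta> D1 Dy x G1 Gy] by simp
    qed
  qed
qed

lemma ederiv_trunc:
  "energy_deriv p \<alpha> \<beta> \<Omega> (\<lambda>x. D1 x * ind S x) (\<lambda>x. ind S x *\<^sub>R Dy x) G1 Gy
     = (LINT x:\<Omega>|lebesgue. ind S x * (A_norm \<alpha> \<beta> D1 Dy x powr (p - 2) *
        (\<bar>fst x\<bar> powr \<alpha> * D1 x * G1 x + (\<Sum>j\<in>UNIV. \<bar>fst x\<bar> powr \<beta> j * Dy x $ j * Gy x $ j))))"
proof -
  have "A_norm \<alpha> \<beta> (\<lambda>x. D1 x * ind S x) (\<lambda>x. ind S x *\<^sub>R Dy x) x powr (p - 2) *
        (\<bar>fst x\<bar> powr \<alpha> * (D1 x * ind S x) * G1 x + (\<Sum>j\<in>UNIV. \<bar>fst x\<bar> powr \<beta> j * (ind S x *\<^sub>R Dy x) $ j * Gy x $ j))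
      = ind S x * (A_norm \<alpha> \<beta> D1 Dy x powr (p - 2) *
        (\<bar>fst x\<bar> powr \<alpha> * D1 x * G1 x + (\<Sum>j\<in>UNIV. \<bar>fst x\<bar> powr \<beta> j * Dy x $ j * Gy x $ j)))" for x
    unfolding An_ind by (cases "x \<in> S") (simp_all add: ind_def)
  then show ?thesis unfolding energy_deriv_def by simp
qed

lemma open_S:
  fixes \<Omega> :: "'m::finite pt set"
  assumes "open \<Omega>"
  shows "open (\<Omega> \<inter> {x. \<sigma> * fst x > 0})"
proof -
  have "open {x::'m pt. \<sigma> * fst x > 0}"
    by (rule open_Collect_less) (auto intro!: continuous_intros)
  then show ?thesis using assms by blast
qed

theorem mainTheorem11:
  fixes p \<alpha> :: real and \<beta> :: "'m::finite \<Rightarrow> real" and \<Omega> :: "'m pt set"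
  assumes "1 < p"
    and "0 \<le> \<alpha>" and "\<alpha> < 2"
    and "\<forall>j. 0 \<le> \<beta> j"
    and "open \<Omega>" and "\<Omega> \<inter> {x. fst x = 0} \<noteq> {}"
    and "2 / (p / (p - 1)) \<le> \<alpha>"
  shows
    "(\<forall>f D1 Dy. loc_integrable \<Omega> f \<and> weak_A_grad \<alpha> \<beta> \<Omega> f D1 Dy \<and> A_norm_Lp p \<alpha> \<beta> \<Omega> D1 Dy \<longrightarrow>
        (\<forall>S \<in> {Omega_plus \<Omega>, Omega_minus \<Omega>}.
           weak_A_grad \<alpha> \<beta> \<Omega> (\<lambda>x. f x * ind S x) (\<lambda>x. D1 x * ind S x) (\<lambda>x. ind S x *\<^sub>R Dy x)
         \<and> A_norm_Lp p \<alpha> \<beta> S (\<lambda>x. D1 x * ind S x) (\<lambda>x. ind S x *\<^sub>R Dy x))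
      \<and> energy p \<alpha> \<beta> \<Omega> D1 Dy =
          energy p \<alpha> \<beta> \<Omega> (\<lambda>x. D1 x * ind (Omega_plus \<Omega>) x) (\<lambda>x. ind (Omega_plus \<Omega>) x *\<^sub>R Dy x)
        + energy p \<alpha> \<beta> \<Omega> (\<lambda>x. D1 x * ind (Omega_minus \<Omega>) x) (\<lambda>x. ind (Omega_minus \<Omega>) x *\<^sub>R Dy x))
   \<and> (\<forall>f D1 Dy g G1 Gy.
        loc_integrable \<Omega> f \<and> weak_A_grad \<alpha> \<beta> \<Omega> f D1 Dy \<and> A_norm_Lp p \<alpha> \<beta> \<Omega> D1 Dy \<and>
        loc_integrable \<Omega> g \<and> weak_A_grad \<alpha> \<beta> \<Omega> g G1 Gy \<and> A_norm_Lp p \<alpha> \<beta> \<Omega> G1 Gy \<longrightarrow>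
        energy_deriv p \<alpha> \<beta> \<Omega> D1 Dy G1 Gy =
          energy_deriv p \<alpha> \<beta> \<Omega> (\<lambda>x. D1 x * ind (Omega_plus \<Omega>) x) (\<lambda>x. ind (Omega_plus \<Omega>) x *\<^sub>R Dy x) G1 Gy
        + energy_deriv p \<alpha> \<beta> \<Omega> (\<lambda>x. D1 x * ind (Omega_minus \<Omega>) x) (\<lambda>x. ind (Omega_minus \<Omega>) x *\<^sub>R Dy x) G1 Gy)"
proof -
  have p: "1 < p" and \<Omega>o: "open \<Omega>" using assms by auto
  have "0 < 2 / (p / (p - 1))" using p by simp
  then have \<alpha>: "0 < \<alpha>" using assms(7) by linarith
  have part1: "(\<forall>S \<in> {Omega_plus \<Omega>, Omega_minus \<Omega>}.
           weak_A_grad \<alpha> \<beta> \<Omega> (\<lambda>x. f x * ind S x) (\<lambda>x. D1 x * ind S x) (\<lambda>x. ind S x *\<^sub>R Dy x)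
         \<and> A_norm_Lp p \<alpha> \<beta> S (\<lambda>x. D1 x * ind S x) (\<lambda>x. ind S x *\<^sub>R Dy x))
      \<and> energy p \<alpha> \<beta> \<Omega> D1 Dy =
          energy p \<alpha> \<beta> \<Omega> (\<lambda>x. D1 x * ind (Omega_plus \<Omega>) x) (\<lambda>x. ind (Omega_plus \<Omega>) x *\<^sub>R Dy x)
        + energy p \<alpha> \<beta> \<Omega> (\<lambda>x. D1 x * ind (Omega_minus \<Omega>) x) (\<lambda>x. ind (Omega_minus \<Omega>) x *\<^sub>R Dy x)"
    if li: "loc_integrable \<Omega> f" and wg: "weak_A_grad \<alpha> \<beta> \<Omega> f D1 Dy" and Lp: "A_norm_Lp p \<alpha> \<beta> \<Omega> D1 Dy"
    for f D1 Dy
  proof -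
    have one: "weak_A_grad \<alpha> \<beta> \<Omega> (\<lambda>x. f x * ind S x) (\<lambda>x. D1 x * ind S x) (\<lambda>x. ind S x *\<^sub>R Dy x)
         \<and> A_norm_Lp p \<alpha> \<beta> S (\<lambda>x. D1 x * ind S x) (\<lambda>x. ind S x *\<^sub>R Dy x)"
      if S: "S = \<Omega> \<inter> {x. \<sigma> * fst x > 0}" and \<sigma>: "\<sigma> = 1 \<or> \<sigma> = -1" for S \<sigma>
    proof
      show "weak_A_grad \<alpha> \<beta> \<Omega> (\<lambda>x. f x * ind S x) (\<lambda>x. D1 x * ind S x) (\<lambda>x. ind S x *\<^sub>R Dy x)"
        unfolding S by (rule trunc_weak[OF \<alpha> \<Omega>o li wg \<sigma>])
      have Sm: "S \<in> sets lebesgue" unfolding S by (rule open_leb[OF open_S[OF \<Omega>o]])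
      show "A_norm_Lp p \<alpha> \<beta> S (\<lambda>x. D1 x * ind S x) (\<lambda>x. ind S x *\<^sub>R Dy x)"
        by (rule trunc_Lp[OF _ _ Sm Lp]) (use p S in auto)
    qed
    have "\<forall>S \<in> {Omega_plus \<Omega>, Omega_minus \<Omega>}.
           weak_A_grad \<alpha> \<beta> \<Omega> (\<lambda>x. f x * ind S x) (\<lambda>x. D1 x * ind S x) (\<lambda>x. ind S x *\<^sub>R Dy x)
         \<and> A_norm_Lp p \<alpha> \<beta> S (\<lambda>x. D1 x * ind S x) (\<lambda>x. ind S x *\<^sub>R Dy x)"
      using one[OF Omega_pm(1)] one[OF Omega_pm(2)] by auto
    moreover have "energy p \<alpha> \<beta> \<Omega> D1 Dy =
          energy p \<alpha> \<beta> \<Omega> (\<lambda>x. D1 x * ind (Omega_plus \<Omega>) x) (\<lambda>x. ind (Omega_plus \<Omega>) x *\<^sub>R Dy x)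
        + energy p \<alpha> \<beta> \<Omega> (\<lambda>x. D1 x * ind (Omega_minus \<Omega>) x) (\<lambda>x. ind (Omega_minus \<Omega>) x *\<^sub>R Dy x)"
      by (rule energy_split[OF _ \<Omega>o Lp]) (use p in simp)
    ultimately show ?thesis by blast
  qed
  have part2: "energy_deriv p \<alpha> \<beta> \<Omega> D1 Dy G1 Gy =
          energy_deriv p \<alpha> \<beta> \<Omega> (\<lambda>x. D1 x * ind (Omega_plus \<Omega>) x) (\<lambda>x. ind (Omega_plus \<Omega>) x *\<^sub>R Dy x) G1 Gy
        + energy_deriv p \<alpha> \<beta> \<Omega> (\<lambda>x. D1 x * ind (Omega_minus \<Omega>) x) (\<lambda>x. ind (Omega_minus \<Omega>) x *\<^sub>R Dy x) G1 Gy"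
    if wg: "weak_A_grad \<alpha> \<beta> \<Omega> f D1 Dy" and Lp: "A_norm_Lp p \<alpha> \<beta> \<Omega> D1 Dy"
      and wgg: "weak_A_grad \<alpha> \<beta> \<Omega> g G1 Gy" and Lpg: "A_norm_Lp p \<alpha> \<beta> \<Omega> G1 Gy"
    for f D1 Dy g G1 Gy
  proof -
    have m: "set_borel_measurable lebesgue \<Omega> D1" "set_borel_measurable lebesgue \<Omega> Dy"
      "set_borel_measurable lebesgue \<Omega> G1" "set_borel_measurable lebesgue \<Omega> Gy"
      using wg wgg unfolding weak_A_grad_def by auto
    have I: "set_integrable lebesgue \<Omega> (\<lambda>x. A_norm \<alpha> \<beta> D1 Dy x powr (p - 2) *
        (\<bar>fst x\<bar> powr \<alpha> * D1 x * G1 x + (\<Sum>j\<in>UNIV. \<bar>fst x\<bar> powr \<beta> j * Dy x $ j * Gy x $ j)))"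
      by (rule I_integrable[OF p Lp Lpg m])
    show ?thesis unfolding ederiv_trunc using split_int[OF \<Omega>o I] by (simp add: energy_deriv_def)
  qed
  show ?thesis using part1 part2 by blast
qed

end
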